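(* There is a sufficiently small absolute constant $c>0$ such that the following holds. Let $\bm{\mathcal{X}}\in\mathbb{R}^{n\times r\times k}$ with $\kappa=\kappa(\bm{\mathcal{X}})$, $\bm{\mathcal{U}}_t\in\mathbb{R}^{n\times R\times k}$ and $\bm{\mathcal{U}}_{t+1}=[\bm{\mathcal{I}}+\mu(\mathcal{A}^*\mathcal{A})(\bm{\mathcal{X}}*\bm{\mathcal{X}}^\top-\bm{\mathcal{U}}_t*\bm{\mathcal{U}}_t^\top)]*\bm{\mathcal{U}}_t$. Assume $\mu\le c\|\bm{\mathcal{X}}\|^{-2}\kappa^{-2}$, $\|\bm{\mathcal{U}}_t\|\le 3\|\bm{\mathcal{X}}\|$, $\|\bm{\mathcal{V}}_{\bm{\mathcal{X}}^\perp}^\top*\bm{\mathcal{V}}_{\bm{\mathcal{U}}_t*\bm{\mathcal{W}}_t}\|\le c\kappa^{-1}$, $\|(\mathcal{A}^*\mathcal{A}-\mathcal{I})(\bm{\mathcal{X}}*\bm{\mathcal{X}}^\top-\bm{\mathcal{U}}_t*\bm{\mathcal{U}}_t^\top)\|\le c\,\sigma_{\min}^2(\overline{\bm{\mathcal{X}}})$, and that $\bm{\mathcal{V}}_{\bm{\mathcal{X}}}^\top*\bm{\mathcal{U}}_t$ has full tubal rank with all t-SVD singular tubes invertible. Then for each $1\le j\le k$, $$\sigma_{\min}\big(\overline{\bm{\mathcal{V}}_{\bm{\mathcal{X}}}^\top*\bm{\mathcal{U}}_{t+1}}^{(j)}\big)\ge\sigma_{\min}\big(\overline{\bm{\mathc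al{V}}_{\bm{\mathcal{X}}}^\top*\bm{\mathcal{U}}_{t+1}*\bm{\mathcal{W}}_t}^{(j)}\big)\ge\sigma_{\min}\big(\overline{\bm{\mathcal{V}}_{\bm{\mathcal{X}}}^\top*\bm{\mathcal{U}}_t}^{(j)}\big)\Big(1+\tfrac14\mu\sigma_{\min}^2(\overline{\bm{\mathcal{X}}})-\mu\sigma_{\min}^2\big(\overline{\bm{\mathcal{V}}_{\bm{\mathcal{X}}}^\top*\bm{\mathcal{U}}_t}^{(j)}\big)\Big).$$
   Context: All tensors are real third-order with third mode of length $k$. Fourier slices $\overline{\bm{\mathcal{T}}}^{(j)}(i,i')=\sum_{j'}\bm{\mathcal{T}}(i,i',j')e^{-\sqrt{-1}\,2\pi(j-1)(j'-1)/k}$, $\overline{\bm{\mathcal{T}}}=\mathrm{blockdiag}(\overline{\bm{\mathcal{T}}}^{(j)})_j$. t-product $*$ is tube-wise circular convolution, $\overline{\bm{\mathcal{A}}*\bm{\mathcal{B}}}=\overline{\bm{\mathcal{A}}}\,\overline{\bm{\mathcal{B}}}$; transpose transposes frontal slices and reverses slices $2,\dots,k$; $\bm{\mathcal{I}}$ identity tensor; $\|\bm{\mathcal{T}}\|=\|\overline{\bm{\mathcal{T}}}\|$. t-SVD $\bm{\mathcal{T}}=\bm{\mathcal{U}}*\bm{\Sigma}*\bm{\mathcal{V}}^\top$; tubal rank = number of nonzero diagonal tubes of $\bm{\Sigma}$; a tube is invertible if its discrete Fourier transform has no zero entries. For a tensor $\bm{\mathcal{Y}}$, $\bm{\mathcal{V}}_{\bm{\mathcal{Y}}}$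 denotes its tensor-column subspace (the left t-SVD factor restricted to the nonzero tubes). $\bm{\mathcal{V}}_{\bm{\mathcal{X}}}\in\mathbb{R}^{n\times r\times k}$ with $\bm{\mathcal{V}}_{\bm{\mathcal{X}}}^\top*\bm{\mathcal{V}}_{\bm{\mathcal{X}}}=\bm{\mathcal{I}}$, and $\bm{\mathcal{V}}_{\bm{\mathcal{X}}^\perp}*\bm{\mathcal{V}}_{\bm{\mathcal{X}}^\perp}^\top=\bm{\mathcal{I}}-\bm{\mathcal{V}}_{\bm{\mathcal{X}}}*\bm{\mathcal{V}}_{\bm{\mathcal{X}}}^\top$. $\bm{\mathcal{W}}_t\in\mathbb{R}^{R\times r\times k}$ is the right factor in a t-SVD $\bm{\mathcal{V}}_{\bm{\mathcal{X}}}^\top*\bm{\mathcal{U}}_t=\bm{\mathcal{V}}_t*\bm{\Sigma}_t*\bm{\mathcal{W}}_t^\top$. $\sigma_{\min}(\overline{\bm{\mathcal{X}}})=\sigma_{rk}(\overline{\bm{\mathcal{X}}})$; $\kappa(\bm{\mathcal{X}})=\sigma_1(\overline{\bm{\mathcal{X}}})/\sigma_{rk}(\overline{\bm{\mathcal{X}}})$. $\mathcal{A}^*\mathcal{A}(\bm{\mathcal{Z}})=\sum_i\langle\bm{\mathcal{A}}_i,\bm{\mathcal{Z}}\rangle\bm{\mathcal{A}}_i$ for fixed tubal-symmetric $\bm{\mathcal{A}}_i\in\mathbb{R}^{n\times n\times k}$, and $\mathcal{I}$ is the identity operator. *)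

theory Defs
  imports "HOL-Analysis.Analysis"
begin

text \<open>Real third-order tensors are encoded as functions nat => nat => nat => real,
  always used together with explicit dimensions p x q x k (0-indexed; entries outside
  the index box are irrelevant junk).  Complex matrices are nat => nat => complex,
  complex vectors nat => complex, again with explicit sizes.\<close>

type_synonym tensor = "nat \<Rightarrow> nat \<Rightarrow> nat \<Rightarrow> real"
type_synonym cmat = "nat \<Rightarrow> nat \<Rightarrow> complex"
type_synonym cvec = "nat \<Rightarrow> complex"

definition teq :: "nat \<Rightarrow> nat \<Rightarrow> nat \<Rightarrow> tensor \<Rightarrow> tensor \<Rightarrow> bool" where
  "teq p q k A B \<longleftrightarrow> (\<forall>i<p. \<forall>l<q. \<forall>t<k. A i l t = B i l t)"

text \<open>t-product of A (p x m x k) and B (m x q x k): tube-wise circular convolution.\<close>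
definition tprod :: "nat \<Rightarrow> nat \<Rightarrow> tensor \<Rightarrow> tensor \<Rightarrow> tensor" where
  "tprod k m A B = (\<lambda>i l t. \<Sum>s<m. \<Sum>t'<k. A i s t' * B s l ((t + k - t') mod k))"

text \<open>Transpose: transpose frontal slices, reverse slices 2..k.\<close>
definition ttr :: "nat \<Rightarrow> tensor \<Rightarrow> tensor" where
  "ttr k T = (\<lambda>i l t. T l i ((k - t) mod k))"

definition tid :: tensor where
  "tid = (\<lambda>i l t. if i = l \<and> t = 0 then 1 else 0)"

definition tadd :: "tensor \<Rightarrow> tensor \<Rightarrow> tensor" where
  "tadd A B = (\<lambda>i l t. A i l t + B i l t)"

definition tsub :: "tensor \<Rightarrow> tensor \<Rightarrow> tensor" where
  "tsub A B = (\<lambda>i l t. A i l t - B i l t)"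

definition tscale :: "real \<Rightarrow> tensor \<Rightarrow> tensor" where
  "tscale a A = (\<lambda>i l t. a * A i l t)"

definition tinner :: "nat \<Rightarrow> nat \<Rightarrow> nat \<Rightarrow> tensor \<Rightarrow> tensor \<Rightarrow> real" where
  "tinner p q k A B = (\<Sum>i<p. \<Sum>l<q. \<Sum>t<k. A i l t * B i l t)"

text \<open>The measurement operator A^*A(Z) = sum_i <A_i, Z> A_i for the m tensors As 0, ..., As (m-1),
  each n x n x k.\<close>
definition AstarA :: "nat \<Rightarrow> nat \<Rightarrow> nat \<Rightarrow> (nat \<Rightarrow> tensor) \<Rightarrow> tensor \<Rightarrow> tensor" where
  "AstarA n k m As Z = (\<lambda>i l t. \<Sum>s<m. tinner n n k (As s) Z * As s i l t)"

text \<open>j-th Fourier slice (j = 0..k-1, corresponding to the paper's j = 1..k).\<close>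
definition fslice :: "nat \<Rightarrow> tensor \<Rightarrow> nat \<Rightarrow> cmat" where
  "fslice k T j = (\<lambda>a b. \<Sum>j'<k. complex_of_real (T a b j') *
        cis (- 2 * pi * real j * real j' / real k))"

definition bdiag :: "nat \<Rightarrow> nat \<Rightarrow> nat \<Rightarrow> (nat \<Rightarrow> cmat) \<Rightarrow> cmat" where
  "bdiag k p q M = (\<lambda>a b. if a div p = b div q \<and> a div p < k
                          then M (a div p) (a mod p) (b mod q) else 0)"

definition tbar :: "nat \<Rightarrow> nat \<Rightarrow> nat \<Rightarrow> tensor \<Rightarrow> cmat" where
  "tbar k p q T = bdiag k p q (fslice k T)"

text \<open>A tube (nat => real, length k) is invertible iff its DFT has no zero entry.\<close>
definition tube_inv :: "nat \<Rightarrow> (nat \<Rightarrow> real) \<Rightarrow> bool" where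
  "tube_inv k f \<longleftrightarrow> (\<forall>j<k. (\<Sum>j'<k. complex_of_real (f j') *
        cis (- 2 * pi * real j * real j' / real k)) \<noteq> 0)"

definition cvnorm :: "nat \<Rightarrow> cvec \<Rightarrow> real" where
  "cvnorm p x = sqrt (\<Sum>a<p. (cmod (x a))\<^sup>2)"

definition mv :: "nat \<Rightarrow> cmat \<Rightarrow> cvec \<Rightarrow> cvec" where
  "mv q A x = (\<lambda>a. \<Sum>b<q. A a b * x b)"

definition specnorm :: "cmat \<Rightarrow> nat \<Rightarrow> nat \<Rightarrow> real" where
  "specnorm A p q = Sup {cvnorm p (mv q A x) | x. cvnorm q x = 1}"

definition isometry :: "nat \<Rightarrow> nat \<Rightarrow> cmat \<Rightarrow> bool" where
  "isometry q i V \<longleftrightarrow> (\<forall>a<i. \<forall>b<i. (\<Sum>c<q. cnj (V c a) * V c b) = (if a = b then 1 else 0))"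

text \<open>i-th largest singular value (1 <= i <= q) of a p x q complex matrix,
  via the Courant-Fischer max-min principle:
  sigma_i(A) = max over i-dimensional subspaces S of C^q of min over unit x in S of |Ax|.\<close>
definition sigma :: "nat \<Rightarrow> cmat \<Rightarrow> nat \<Rightarrow> nat \<Rightarrow> real" where
  "sigma i A p q = Sup {Inf {cvnorm p (mv q A (mv i V y)) | y. cvnorm i y = 1} | V. isometry q i V}"

definition sigma_min :: "cmat \<Rightarrow> nat \<Rightarrow> nat \<Rightarrow> real" where
  "sigma_min A p q = sigma (min p q) A p q"

definition tnorm :: "nat \<Rightarrow> nat \<Rightarrow> nat \<Rightarrow> tensor \<Rightarrow> real" where
  "tnorm k p q T = specnorm (tbar k p q T) (k * p) (k * q)"

text \<open>sigma_min of the block-diagonal of X (n x r x k) = sigma_{rk}.\<close>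
definition tsigma_min :: "nat \<Rightarrow> nat \<Rightarrow> nat \<Rightarrow> tensor \<Rightarrow> real" where
  "tsigma_min k n r X = sigma (r * k) (tbar k n r X) (k * n) (k * r)"

definition kappa :: "nat \<Rightarrow> nat \<Rightarrow> nat \<Rightarrow> tensor \<Rightarrow> real" where
  "kappa k n r X = tnorm k n r X / tsigma_min k n r X"

text \<open>Compact t-SVD  T = U * S * V^T  of a p x q x k tensor with s singular tubes:
  U (p x s) and V (q x s) have orthonormal tensor columns, S (s x s) is f-diagonal and
  its Fourier slices are real, nonnegative, nonincreasing diagonal matrices.\<close>
definition tsvd_compact :: "nat \<Rightarrow> nat \<Rightarrow> nat \<Rightarrow> nat \<Rightarrow> tensor \<Rightarrow> tensor \<Rightarrow> tensor \<Rightarrow> tensor \<Rightarrow> bool" where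
  "tsvd_compact p q k s T U S V \<longleftrightarrow>
     teq s s k (tprod k p (ttr k U) U) tid \<and>
     teq s s k (tprod k q (ttr k V) V) tid \<and>
     (\<forall>a<s. \<forall>b<s. a \<noteq> b \<longrightarrow> (\<forall>t<k. S a b t = 0)) \<and>
     (\<forall>j<k. \<forall>a<s. Im (fslice k S j a a) = 0 \<and> 0 \<le> Re (fslice k S j a a)) \<and>
     (\<forall>j<k. \<forall>a<s. \<forall>b<s. a \<le> b \<longrightarrow> Re (fslice k S j b b) \<le> Re (fslice k S j a a)) \<and>
     teq p q k T (tprod k s (tprod k s U S) (ttr k V))"

text \<open>Tensor-column subspace: U (p x s) is the left t-SVD factor of T restricted to the
  s nonzero singular tubes.\<close>
definition colsub :: "nat \<Rightarrow> nat \<Rightarrow> nat \<Rightarrow> nat \<Rightarrow> tensor \<Rightarrow> tensor \<Rightarrow> bool" where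
  "colsub p q k s T U \<longleftrightarrow>
     (\<exists>S V. tsvd_compact p q k s T U S V \<and> (\<forall>a<s. \<exists>t<k. S a a t \<noteq> 0))"

definition gd_step :: "nat \<Rightarrow> nat \<Rightarrow> nat \<Rightarrow> nat \<Rightarrow> nat \<Rightarrow> (nat \<Rightarrow> tensor) \<Rightarrow> real \<Rightarrow> tensor \<Rightarrow> tensor \<Rightarrow> tensor" where
  "gd_step n r R k m As \<mu> X U =
     tprod k n (tadd tid (tscale \<mu> (AstarA n k m As
        (tsub (tprod k r X (ttr k X)) (tprod k R U (ttr k U)))))) U"

end

theory Submission
  imports Defs "Jordan_Normal_Form.Determinant"
begin


definition cinner :: "nat \<Rightarrow> cvec \<Rightarrow> cvec \<Rightarrow> complex" where
  "cinner p x y = (\<Sum>a<p. cnj (x a) * y a)"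

definition adj :: "cmat \<Rightarrow> cmat" where
  "adj A = (\<lambda>a b. cnj (A b a))"

definition mm :: "nat \<Rightarrow> cmat \<Rightarrow> cmat \<Rightarrow> cmat" where
  "mm q A B = (\<lambda>a b. \<Sum>s<q. A a s * B s b)"

definition bnd :: "nat \<Rightarrow> nat \<Rightarrow> cmat \<Rightarrow> real \<Rightarrow> bool" where
  "bnd p q A K \<longleftrightarrow> (\<forall>x. cvnorm p (mv q A x) \<le> K * cvnorm q x)"

lemma cvnorm_L2: "cvnorm p x = L2_set (\<lambda>a. cmod (x a)) {..<p}"
  unfolding cvnorm_def L2_set_def by simp

lemma cvnorm_nonneg[simp]: "0 \<le> cvnorm p x"
  unfolding cvnorm_def by (intro real_sqrt_ge_zero sum_nonneg) simp

lemma cvnorm_sq: "(cvnorm p x)\<^sup>2 = (\<Sum>a<p. (cmod (x a))\<^sup>2)"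
  unfolding cvnorm_def by (rule real_sqrt_pow2, rule sum_nonneg, simp)

lemma cinner_self: "cinner p x x = complex_of_real ((cvnorm p x)\<^sup>2)"
  unfolding cinner_def cvnorm_sq of_real_sum
  by (rule sum.cong) (auto simp: complex_norm_square mult.commute simp flip: of_real_power)

lemma Re_cinner_self: "Re (cinner p x x) = (cvnorm p x)\<^sup>2"
  by (simp add: cinner_self)

lemma cinner_CS: "cmod (cinner p x y) \<le> cvnorm p x * cvnorm p y"
proof -
  have "cmod (cinner p x y) \<le> (\<Sum>a<p. cmod (cnj (x a) * y a))"
    unfolding cinner_def by (rule norm_sum)
  also have "\<dots> = (\<Sum>a<p. \<bar>cmod (x a)\<bar> * \<bar>cmod (y a)\<bar>)"
    by (simp add: norm_mult)
  also have "\<dots> \<le> cvnorm p x * cvnorm p y"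
    unfolding cvnorm_L2 by (rule L2_set_mult_ineq)
  finally show ?thesis .
qed

lemma Re_cinner_CS: "Re (cinner p x y) \<le> cvnorm p x * cvnorm p y"
  using cinner_CS[of p x y] complex_Re_le_cmod[of "cinner p x y"] by linarith

lemma cvnorm_add: "cvnorm p (\<lambda>a. x a + y a) \<le> cvnorm p x + cvnorm p y"
proof -
  have "cvnorm p (\<lambda>a. x a + y a) \<le> L2_set (\<lambda>a. cmod (x a) + cmod (y a)) {..<p}"
    unfolding cvnorm_L2 by (rule L2_set_mono) (auto simp: norm_triangle_ineq)
  also have "\<dots> \<le> cvnorm p x + cvnorm p y"
    unfolding cvnorm_L2 by (rule L2_set_triangle_ineq)
  finally show ?thesis .
qed

lemma cvnorm_scale: "cvnorm p (\<lambda>a. c * x a) = cmod c * cvnorm p x"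
  unfolding cvnorm_L2 by (simp add: norm_mult L2_set_right_distrib)

lemma cvnorm_minus: "cvnorm p (\<lambda>a. - x a) = cvnorm p x"
  unfolding cvnorm_L2 by simp

lemma cvnorm_diff: "cvnorm p (\<lambda>a. x a - y a) \<le> cvnorm p x + cvnorm p y"
  using cvnorm_add[of p x "\<lambda>a. - y a"] cvnorm_minus[of p y] by simp

lemma cvnorm_diff_ge: "cvnorm p x - cvnorm p y \<le> cvnorm p (\<lambda>a. x a + y a)"
proof -
  have "cvnorm p x \<le> cvnorm p (\<lambda>a. x a + y a) + cvnorm p (\<lambda>a. - y a)"
    using cvnorm_add[of p "\<lambda>a. x a + y a" "\<lambda>a. - y a"] by simp
  thus ?thesis using cvnorm_minus[of p y] by simp
qed

lemma cvnorm_cong: "(\<And>a. a < p \<Longrightarrow> x a = y a) \<Longrightarrow> cvnorm p x = cvnorm p y"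
  unfolding cvnorm_def by simp

lemma cinner_cong: "(\<And>a. a < p \<Longrightarrow> x a = x' a) \<Longrightarrow> (\<And>a. a < p \<Longrightarrow> y a = y' a) \<Longrightarrow>
   cinner p x y = cinner p x' y'"
  unfolding cinner_def by simp

lemma mv_cong: "(\<And>b. b < q \<Longrightarrow> x b = y b) \<Longrightarrow> mv q A x = mv q A y"
  unfolding mv_def by (rule ext) simp

lemma mv_cong_mat: "(\<And>b. b < q \<Longrightarrow> A a b = B a b) \<Longrightarrow> mv q A x a = mv q B x a"
  unfolding mv_def by simp

lemma cinner_adj: "cinner p x (mv q A y) = cinner q (mv p (adj A) x) y"
  unfolding cinner_def mv_def adj_def
  by (simp add: sum_distrib_left sum_distrib_right cnj_sum mult.assoc mult.left_commute sum.swap[of _ "{..<p}"])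

lemma adj_adj[simp]: "adj (adj A) = A"
  unfolding adj_def by simp

lemma mv_mm: "mv q (mm m A B) x = mv m A (mv q B x)"
  unfolding mv_def mm_def
  by (rule ext) (simp add: sum_distrib_left sum_distrib_right mult.assoc sum.swap[of _ "{..<q}"])

lemma mv_add: "mv q A (\<lambda>b. x b + y b) = (\<lambda>a. mv q A x a + mv q A y a)"
  unfolding mv_def by (simp add: distrib_left sum.distrib)

lemma mv_scale: "mv q A (\<lambda>b. c * x b) = (\<lambda>a. c * mv q A x a)"
  unfolding mv_def by (simp add: sum_distrib_left mult.left_commute)

lemma cvnorm_sq_add: "(cvnorm p (\<lambda>a. x a + y a))\<^sup>2 = (cvnorm p x)\<^sup>2 + 2 * Re (cinner p x y) + (cvnorm p y)\<^sup>2"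
proof -
  have "complex_of_real ((cvnorm p (\<lambda>a. x a + y a))\<^sup>2) = cinner p x x + cinner p x y + cinner p y x + cinner p y y"
    unfolding cinner_self[symmetric] unfolding cinner_def by (simp add: algebra_simps sum.distrib)
  moreover have "cinner p y x = cnj (cinner p x y)" unfolding cinner_def by (simp add: cnj_sum mult.commute)
  ultimately have "(cvnorm p (\<lambda>a. x a + y a))\<^sup>2 = Re (cinner p x x + cinner p x y + cinner p y x + cinner p y y)"
    by (metis Re_complex_of_real)
  thus ?thesis using \<open>cinner p y x = cnj (cinner p x y)\<close> by (simp add: Re_cinner_self)
qed



lemma cvnorm_eq_0: "cvnorm p x = 0 \<Longrightarrow> a < p \<Longrightarrow> x a = 0"
  unfolding cvnorm_L2 by (simp add: L2_set_eq_0_iff)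

lemma mv_zero_vec: "(\<And>b. b < q \<Longrightarrow> x b = 0) \<Longrightarrow> mv q A x a = 0"
  unfolding mv_def by simp

lemma cvnorm_zero_vec: "(\<And>a. a < p \<Longrightarrow> x a = 0) \<Longrightarrow> cvnorm p x = 0"
  unfolding cvnorm_def by simp

lemma row_bound: "cmod (mv q A x a) \<le> L2_set (\<lambda>b. cmod (A a b)) {..<q} * cvnorm q x"
proof -
  have "cmod (mv q A x a) \<le> (\<Sum>b<q. cmod (A a b * x b))" unfolding mv_def by (rule norm_sum)
  also have "\<dots> = (\<Sum>b<q. \<bar>cmod (A a b)\<bar> * \<bar>cmod (x b)\<bar>)" by (simp add: norm_mult)
  also have "\<dots> \<le> L2_set (\<lambda>b. cmod (A a b)) {..<q} * cvnorm q x"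
    unfolding cvnorm_L2 by (rule L2_set_mult_ineq)
  finally show ?thesis .
qed

lemma frob_bnd: "\<exists>K\<ge>0. bnd p q A K"
proof -
  define K where "K = sqrt (\<Sum>a<p. (L2_set (\<lambda>b. cmod (A a b)) {..<q})\<^sup>2)"
  have "bnd p q A K" unfolding bnd_def
  proof
    fix x
    have "(cvnorm p (mv q A x))\<^sup>2 = (\<Sum>a<p. (cmod (mv q A x a))\<^sup>2)" by (rule cvnorm_sq)
    also have "\<dots> \<le> (\<Sum>a<p. (L2_set (\<lambda>b. cmod (A a b)) {..<q} * cvnorm q x)\<^sup>2)"
      by (intro sum_mono power_mono row_bound) simp
    also have "\<dots> = K\<^sup>2 * (cvnorm q x)\<^sup>2"
      unfolding K_def by (subst real_sqrt_pow2) (auto intro: sum_nonneg simp: power_mult_distrib sum_distrib_right)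
    finally have "(cvnorm p (mv q A x))\<^sup>2 \<le> (K * cvnorm q x)\<^sup>2" by (simp add: power_mult_distrib)
    thus "cvnorm p (mv q A x) \<le> K * cvnorm q x"
      by (rule power2_le_imp_le) (simp add: K_def sum_nonneg)
  qed
  thus ?thesis unfolding K_def by (intro exI[of _ K]) (auto simp: K_def intro!: sum_nonneg)
qed

lemma bnd_apply: "bnd p q A K \<Longrightarrow> cvnorm p (mv q A x) \<le> K * cvnorm q x"
  unfolding bnd_def by blast

lemma unit_scale:
  assumes "cvnorm q x \<noteq> 0"
  shows "cvnorm q (\<lambda>b. complex_of_real (1 / cvnorm q x) * x b) = 1"
  unfolding cvnorm_scale using assms by (simp add: norm_divide)

lemma bnd_from_unit:
  assumes "\<And>x. cvnorm q x = 1 \<Longrightarrow> cvnorm p (mv q A x) \<le> K"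
  shows "bnd p q A K"
  unfolding bnd_def
proof
  fix x
  show "cvnorm p (mv q A x) \<le> K * cvnorm q x"
  proof (cases "cvnorm q x = 0")
    case True
    have "cvnorm p (mv q A x) = 0"
    proof (rule cvnorm_zero_vec)
      fix a assume "a < p"
      show "mv q A x a = 0" by (rule mv_zero_vec) (rule cvnorm_eq_0[OF True])
    qed
    thus ?thesis using True by simp
  next
    case False
    let ?c = "complex_of_real (1 / cvnorm q x)"
    have "cvnorm p (mv q A (\<lambda>b. ?c * x b)) \<le> K" using assms unit_scale[OF False] by blast
    hence "(1 / cvnorm q x) * cvnorm p (mv q A x) \<le> K"
      unfolding mv_scale cvnorm_scale by (simp add: norm_divide)
    moreover have "0 < cvnorm q x" using False cvnorm_nonneg[of q x] by linarith
    ultimately show ?thesis by (simp add: field_simps)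
  qed
qed

lemma specnorm_bnd:
  assumes "0 < q"
  shows "bnd p q A (specnorm A p q)"
proof (rule bnd_from_unit)
  fix x assume x: "cvnorm q x = 1"
  obtain K where K: "K \<ge> 0" "bnd p q A K" using frob_bnd by blast
  show "cvnorm p (mv q A x) \<le> specnorm A p q"
    unfolding specnorm_def
  proof (rule cSup_upper)
    show "cvnorm p (mv q A x) \<in> {cvnorm p (mv q A x) |x. cvnorm q x = 1}" using x by blast
    show "bdd_above {cvnorm p (mv q A x) |x. cvnorm q x = 1}"
      by (rule bdd_aboveI[of _ K]) (use bnd_apply[OF K(2)] in \<open>auto, metis mult.right_neutral\<close>)
  qed
qed

lemma bnd_mono: "bnd p q A K \<Longrightarrow> K \<le> K' \<Longrightarrow> bnd p q A K'"
  unfolding bnd_def using cvnorm_nonneg mult_right_mono order_trans by metis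

lemma bnd_mm:
  assumes A: "bnd p m A K1" and B: "bnd m q B K2" and K1: "0 \<le> K1"
  shows "bnd p q (mm m A B) (K1 * K2)"
  unfolding bnd_def mv_mm
proof
  fix x
  have "cvnorm p (mv m A (mv q B x)) \<le> K1 * cvnorm m (mv q B x)" using A bnd_apply by blast
  also have "\<dots> \<le> K1 * (K2 * cvnorm q x)" using B K1 bnd_apply by (intro mult_left_mono) auto
  finally show "cvnorm p (mv m A (mv q B x)) \<le> K1 * K2 * cvnorm q x" by (simp add: mult.assoc)
qed

lemma bnd_adj:
  assumes "bnd p q A K" "0 \<le> K"
  shows "bnd q p (adj A) K"
  unfolding bnd_def
proof
  fix x
  let ?y = "mv p (adj A) x"
  have "(cvnorm q ?y)\<^sup>2 = Re (cinner q ?y ?y)" by (simp add: Re_cinner_self)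
  also have "cinner q ?y ?y = cinner p x (mv q A ?y)" by (simp add: cinner_adj)
  also have "Re \<dots> \<le> cvnorm p x * cvnorm p (mv q A ?y)" by (rule Re_cinner_CS)
  also have "\<dots> \<le> cvnorm p x * (K * cvnorm q ?y)"
    by (intro mult_left_mono bnd_apply[OF assms(1)]) simp
  finally have *: "(cvnorm q ?y)\<^sup>2 \<le> K * cvnorm p x * cvnorm q ?y" by (simp add: ac_simps)
  show "cvnorm q ?y \<le> K * cvnorm p x"
  proof (cases "cvnorm q ?y = 0")
    case True
    thus ?thesis using assms(2) by simp
  next
    case False
    hence "0 < cvnorm q ?y" using cvnorm_nonneg[of q ?y] by linarith
    thus ?thesis using * by (simp add: power2_eq_square)
  qed
qed



lemma isometry_inv:
  assumes "isometry q i V" "a < i"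
  shows "mv q (adj V) (mv i V y) a = y a"
proof -
  have "mv q (adj V) (mv i V y) a = (\<Sum>b<i. (\<Sum>c<q. cnj (V c a) * V c b) * y b)"
    unfolding mv_def adj_def
    by (simp add: sum_distrib_left sum_distrib_right mult.assoc sum.swap[of _ "{..<q}"])
  also have "\<dots> = (\<Sum>b<i. (if a = b then 1 else 0) * y b)"
    using assms unfolding isometry_def by (intro sum.cong) auto
  also have "\<dots> = (\<Sum>b<i. if a = b then y b else 0)" by (intro sum.cong) auto
  also have "\<dots> = y a" using assms(2) by simp
  finally show ?thesis .
qed

lemma isometry_norm:
  assumes "isometry q i V"
  shows "cvnorm q (mv i V y) = cvnorm i y"
proof -
  have "(cvnorm q (mv i V y))\<^sup>2 = Re (cinner q (mv i V y) (mv i V y))" by (simp add: Re_cinner_self)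
  also have "cinner q (mv i V y) (mv i V y) = cinner i (mv q (adj V) (mv i V y)) y"
    by (rule cinner_adj)
  also have "\<dots> = cinner i y y" by (rule cinner_cong) (auto simp: isometry_inv[OF assms])
  finally have "(cvnorm q (mv i V y))\<^sup>2 = (cvnorm i y)\<^sup>2" by (simp add: Re_cinner_self)
  thus ?thesis by (simp add: power2_eq_iff_nonneg)
qed

definition e0 :: cvec where "e0 = (\<lambda>a. if a = 0 then 1 else 0)"

lemma e0_unit: "0 < i \<Longrightarrow> cvnorm i e0 = 1"
proof -
  have "(\<Sum>a<i. (cmod (e0 a))\<^sup>2) = (\<Sum>a<i. if a = 0 then 1 else 0)" by (rule sum.cong) (auto simp: e0_def)
  thus "0 < i \<Longrightarrow> cvnorm i e0 = 1" unfolding cvnorm_def by simp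
qed

lemma inf_set_bdd: "bdd_below {cvnorm p (mv q A (mv i V y)) |y. cvnorm i y = 1}"
  by (rule bdd_belowI[of _ 0]) auto

lemma sigma_set_bdd:
  assumes "0 < i"
  shows "bdd_above {Inf {cvnorm p (mv q A (mv i V y)) |y. cvnorm i y = 1} |V. isometry q i V}"
proof -
  obtain K where K: "K \<ge> 0" "bnd p q A K" using frob_bnd by blast
  show ?thesis
  proof (rule bdd_aboveI[of _ K], clarify)
    fix V assume V: "isometry q i V"
    have "Inf {cvnorm p (mv q A (mv i V y)) |y. cvnorm i y = 1} \<le> cvnorm p (mv q A (mv i V e0))"
      by (rule cInf_lower[OF _ inf_set_bdd]) (use e0_unit[OF assms] in blast)
    also have "\<dots> \<le> K * cvnorm q (mv i V e0)" by (rule bnd_apply[OF K(2)])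
    also have "\<dots> = K" using isometry_norm[OF V] e0_unit[OF assms] by simp
    finally show "Inf {cvnorm p (mv q A (mv i V y)) |y. cvnorm i y = 1} \<le> K" .
  qed
qed

lemma sigma_ge:
  assumes "0 < i" "isometry q i V0"
    "\<And>y. cvnorm i y = 1 \<Longrightarrow> b \<le> cvnorm p (mv q A (mv i V0 y))"
  shows "b \<le> sigma i A p q"
proof -
  have "b \<le> Inf {cvnorm p (mv q A (mv i V0 y)) |y. cvnorm i y = 1}"
    by (rule cInf_greatest) (use assms e0_unit in auto)
  also have "\<dots> \<le> sigma i A p q" unfolding sigma_def
    by (rule cSup_upper[OF _ sigma_set_bdd[OF assms(1)]]) (use assms(2) in blast)
  finally show ?thesis .
qed

lemma sigma_le:
  assumes "0 < i" "isometry q i V0"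
    "\<And>V. isometry q i V \<Longrightarrow> \<exists>y. cvnorm i y = 1 \<and> cvnorm p (mv q A (mv i V y)) \<le> b"
  shows "sigma i A p q \<le> b"
  unfolding sigma_def
proof (rule cSup_least)
  show "{Inf {cvnorm p (mv q A (mv i V y)) |y. cvnorm i y = 1} |V. isometry q i V} \<noteq> {}"
    using assms(2) by blast
next
  fix s assume "s \<in> {Inf {cvnorm p (mv q A (mv i V y)) |y. cvnorm i y = 1} |V. isometry q i V}"
  then obtain V where V: "isometry q i V" and s: "s = Inf {cvnorm p (mv q A (mv i V y)) |y. cvnorm i y = 1}"
    by blast
  obtain y where y: "cvnorm i y = 1" "cvnorm p (mv q A (mv i V y)) \<le> b" using assms(3)[OF V] by blast
  show "s \<le> b" unfolding s
    by (rule cInf_lower2[OF _ y(2) inf_set_bdd]) (use y in blast)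
qed

lemma sigma_nonneg:
  assumes "0 < i" "isometry q i V0"
  shows "0 \<le> sigma i A p q"
  by (rule sigma_ge[OF assms]) simp



definition om :: "nat \<Rightarrow> nat \<Rightarrow> nat \<Rightarrow> complex" where
  "om k j x = cis (- 2 * pi * real j * real x / real k)"

lemma fslice_om: "fslice k T j a b = (\<Sum>t<k. complex_of_real (T a b t) * om k j t)"
  unfolding fslice_def om_def by simp

lemma om_add: "om k j (x + y) = om k j x * om k j y"
proof -
  have "- 2 * pi * real j * real (x + y) / real k = (- 2 * pi * real j * real x + - 2 * pi * real j * real y) / real k"
    by (simp add: algebra_simps)
  also have "\<dots> = - 2 * pi * real j * real x / real k + - 2 * pi * real j * real y / real k"
    by (rule add_divide_distrib)
  finally show ?thesis unfolding om_def cis_mult by simp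
qed

lemma om_mult_k: "0 < k \<Longrightarrow> om k j (k * m) = 1"
proof -
  assume k: "0 < k"
  have "- 2 * pi * real j * real (k * m) / real k = 2 * pi * of_int (- int (j * m))"
    using k by (simp add: field_simps)
  thus ?thesis unfolding om_def by (simp del: of_int_minus)
qed

lemma om_mod: "0 < k \<Longrightarrow> om k j (x mod k) = om k j x"
proof -
  assume k: "0 < k"
  have "om k j x = om k j (x mod k + k * (x div k))" by (metis mod_mult_div_eq)
  also have "\<dots> = om k j (x mod k)" by (simp only: om_add om_mult_k[OF k] mult_1_right)
  finally show ?thesis by simp
qed

lemma om_cong: "0 < k \<Longrightarrow> x mod k = y mod k \<Longrightarrow> om k j x = om k j y"
  by (metis om_mod)

lemma om_nonzero: "om k j x \<noteq> 0"
  unfolding om_def by simp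

lemma om_cnj: "cnj (om k j x) * om k j x = 1"
  unfolding om_def cis_cnj cis_mult by simp

lemma sum_shift:
  assumes "t' \<le> (k::nat)"
  shows "(\<Sum>t<k. h ((t + k - t') mod k)) = (\<Sum>t<k. h t)"
proof (rule sum.reindex_bij_witness[where i = "\<lambda>u. (u + t') mod k" and j = "\<lambda>t. (t + k - t') mod k"])
  fix t assume t: "t \<in> {..<k}"
  have "((t + k - t') mod k + t') mod k = (t + k - t' + t') mod k" by (simp only: mod_add_left_eq)
  also have "t + k - t' + t' = t + k" using assms by simp
  finally show "((t + k - t') mod k + t') mod k = t" using t by simp
  show "(t + k - t') mod k \<in> {..<k}" using t by simp
next
  fix u assume u: "u \<in> {..<k}"
  have "(u + t') mod k + k - t' = (u + t') mod k + (k - t')" using assms by simp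
  hence "((u + t') mod k + k - t') mod k = ((u + t') + (k - t')) mod k" by (metis mod_add_left_eq)
  also have "(u + t') + (k - t') = u + k" using assms by simp
  finally show "((u + t') mod k + k - t') mod k = u" using u by simp
  show "(u + t') mod k \<in> {..<k}" using u by simp
qed simp

lemma fslice_tprod:
  assumes k: "0 < k"
  shows "fslice k (tprod k m A B) j a b = mm m (fslice k A j) (fslice k B j) a b"
proof -
  have "fslice k (tprod k m A B) j a b =
    (\<Sum>s<m. \<Sum>t'<k. complex_of_real (A a s t') * (\<Sum>t<k. complex_of_real (B s b ((t + k - t') mod k)) * om k j t))"
  proof -
    have "fslice k (tprod k m A B) j a b = (\<Sum>t<k. \<Sum>s<m. \<Sum>t'<k. complex_of_real (A a s t') * (complex_of_real (B s b ((t + k - t') mod k)) * om k j t))"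
      unfolding fslice_om tprod_def by (simp add: sum_distrib_right mult.assoc)
    also have "\<dots> = (\<Sum>s<m. \<Sum>t<k. \<Sum>t'<k. complex_of_real (A a s t') * (complex_of_real (B s b ((t + k - t') mod k)) * om k j t))"
      by (rule sum.swap)
    also have "\<dots> = (\<Sum>s<m. \<Sum>t'<k. \<Sum>t<k. complex_of_real (A a s t') * (complex_of_real (B s b ((t + k - t') mod k)) * om k j t))"
      by (rule sum.cong[OF refl], rule sum.swap)
    also have "\<dots> = (\<Sum>s<m. \<Sum>t'<k. complex_of_real (A a s t') * (\<Sum>t<k. complex_of_real (B s b ((t + k - t') mod k)) * om k j t))"
      by (simp add: sum_distrib_left)
    finally show ?thesis .
  qed
  also have "\<dots> = (\<Sum>s<m. \<Sum>t'<k. complex_of_real (A a s t') * (om k j t' * fslice k B j s b))"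
  proof (intro sum.cong refl)
    fix s t' assume t': "t' \<in> {..<k}"
    have "(\<Sum>t<k. complex_of_real (B s b ((t + k - t') mod k)) * om k j t)
        = (\<Sum>t<k. om k j t' * (complex_of_real (B s b ((t + k - t') mod k)) * om k j ((t + k - t') mod k)))"
    proof (rule sum.cong[OF refl])
      fix t assume t: "t \<in> {..<k}"
      have "om k j t = om k j (t' + (t + k - t') mod k)"
      proof (rule om_cong[OF k])
        have "(t' + (t + k - t') mod k) mod k = (t' + (t + k - t')) mod k" by (simp add: mod_add_right_eq)
        also have "t' + (t + k - t') = t + k" using t' by simp
        finally show "t mod k = (t' + (t + k - t') mod k) mod k" by simp
      qed
      thus "complex_of_real (B s b ((t + k - t') mod k)) * om k j t =
          om k j t' * (complex_of_real (B s b ((t + k - t') mod k)) * om k j ((t + k - t') mod k))"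
        by (simp add: om_add)
    qed
    also have "\<dots> = om k j t' * (\<Sum>t<k. complex_of_real (B s b ((t + k - t') mod k)) * om k j ((t + k - t') mod k))"
      by (simp add: sum_distrib_left)
    also have "(\<Sum>t<k. complex_of_real (B s b ((t + k - t') mod k)) * om k j ((t + k - t') mod k)) = fslice k B j s b"
      unfolding fslice_om using sum_shift[of t' k "\<lambda>u. complex_of_real (B s b u) * om k j u"] t' by simp
    finally show "complex_of_real (A a s t') * (\<Sum>t<k. complex_of_real (B s b ((t + k - t') mod k)) * om k j t) =
         complex_of_real (A a s t') * (om k j t' * fslice k B j s b)" by simp
  qed
  also have "\<dots> = mm m (fslice k A j) (fslice k B j) a b"
    unfolding mm_def fslice_om by (simp add: sum_distrib_right mult.assoc)
  finally show ?thesis .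
qed

lemma rev_inv: "t < k \<Longrightarrow> (k - (k - t) mod k) mod k = (t::nat)"
  by (cases "t = 0") auto

lemma sum_rev:
  "(\<Sum>t<k. h ((k - t) mod k)) = (\<Sum>t<k. h (t::nat))"
  by (rule sum.reindex_bij_witness[where i = "\<lambda>u. (k - u) mod k" and j = "\<lambda>t. (k - t) mod k"])
     (auto simp: rev_inv)

lemma om_rev: "0 < k \<Longrightarrow> u < k \<Longrightarrow> om k j ((k - u) mod k) = cnj (om k j u)"
proof -
  assume k: "0 < k" and u: "u < k"
  have "om k j ((k - u) mod k) * om k j u = om k j ((k - u) mod k + u)" by (simp add: om_add)
  also have "\<dots> = om k j (k * 1)"
  proof (rule om_cong[OF k])
    have "((k - u) mod k + u) mod k = ((k - u) + u) mod k" by (simp add: mod_add_left_eq)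
    thus "((k - u) mod k + u) mod k = (k * 1) mod k" using u by simp
  qed
  also have "\<dots> = 1" by (rule om_mult_k[OF k])
  finally have "om k j ((k - u) mod k) * om k j u = cnj (om k j u) * om k j u" using om_cnj by simp
  thus ?thesis using om_nonzero by simp
qed

lemma fslice_ttr:
  assumes k: "0 < k"
  shows "fslice k (ttr k T) j a b = adj (fslice k T j) a b"
proof -
  have "fslice k (ttr k T) j a b = (\<Sum>t<k. complex_of_real (T b a ((k - t) mod k)) * om k j t)"
    unfolding fslice_om ttr_def by simp
  also have "\<dots> = (\<Sum>t<k. complex_of_real (T b a ((k - t) mod k)) * om k j ((k - (k - t) mod k) mod k))"
  proof (rule sum.cong[OF refl])
    fix t assume t: "t \<in> {..<k}"
    have "(k - (k - t) mod k) mod k = t" using t rev_inv by simp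
    thus "complex_of_real (T b a ((k - t) mod k)) * om k j t = complex_of_real (T b a ((k - t) mod k)) * om k j ((k - (k - t) mod k) mod k)" by simp
  qed
  also have "\<dots> = (\<Sum>t<k. complex_of_real (T b a t) * om k j ((k - t) mod k))"
    by (rule sum_rev[of "\<lambda>u. complex_of_real (T b a u) * om k j ((k - u) mod k)"])
  also have "\<dots> = (\<Sum>t<k. complex_of_real (T b a t) * cnj (om k j t))"
    by (rule sum.cong[OF refl]) (simp add: om_rev[OF k])
  also have "\<dots> = adj (fslice k T j) a b"
    unfolding adj_def fslice_om by simp
  finally show ?thesis .
qed

lemma fslice_tadd: "fslice k (tadd A B) j a b = fslice k A j a b + fslice k B j a b"
  unfolding fslice_om tadd_def by (simp add: distrib_right sum.distrib)

lemma fslice_tsub: "fslice k (tsub A B) j a b = fslice k A j a b - fslice k B j a b"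
  unfolding fslice_om tsub_def by (simp add: left_diff_distrib sum_subtractf)

lemma fslice_tscale: "fslice k (tscale c A) j a b = complex_of_real c * fslice k A j a b"
  unfolding fslice_om tscale_def by (simp add: sum_distrib_left mult.assoc)

lemma fslice_tid: "0 < k \<Longrightarrow> fslice k tid j a b = (if a = b then 1 else 0)"
proof -
  assume k: "0 < k"
  have "fslice k tid j a b = (\<Sum>t<k. if t = 0 then (if a = b then 1 else 0) * om k j t else 0)"
    unfolding fslice_om tid_def by (rule sum.cong) auto
  also have "\<dots> = (if a = b then 1 else 0) * om k j 0" using k by (simp add: sum.delta)
  also have "om k j 0 = 1" unfolding om_def by simp
  finally show ?thesis by simp
qed

lemma fslice_teq: "teq p q k A B \<Longrightarrow> a < p \<Longrightarrow> b < q \<Longrightarrow> fslice k A j a b = fslice k B j a b"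
  unfolding teq_def fslice_om by simp



lemma jnf_mv:
  assumes "a < n" "w \<in> carrier_vec n"
  shows "(Matrix.mat n n (\<lambda>(i,j). T i j) *\<^sub>v w) $ a = mv n T (\<lambda>b. w $ b) a"
  using assms unfolding mv_def mult_mat_vec_def scalar_prod_def
  by (simp add: atLeast0LessThan)

lemma square_dich:
  "(\<exists>y. cvnorm n y = 1 \<and> (\<forall>a<n. mv n T y a = 0)) \<or> (\<forall>u. \<exists>y. \<forall>a<n. mv n T y a = u a)"
proof -
  define A where "A = Matrix.mat n n (\<lambda>(i,j). T i j)"
  have A: "A \<in> carrier_mat n n" unfolding A_def by simp
  show ?thesis
  proof (cases "det A = 0")
    case True
    then obtain v where v: "v \<in> carrier_vec n" "v \<noteq> 0\<^sub>v n" "A *\<^sub>v v = 0\<^sub>v n"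
      using det_0_iff_vec_prod_zero[OF A] by blast
    define y where "y = (\<lambda>b. v $ b)"
    have "cvnorm n y \<noteq> 0"
    proof
      assume "cvnorm n y = 0"
      hence "\<And>b. b < n \<Longrightarrow> v $ b = 0" using cvnorm_eq_0 unfolding y_def by blast
      hence "v = 0\<^sub>v n" using v(1) by (intro eq_vecI) auto
      thus False using v(2) by simp
    qed
    have y0: "mv n T y a = 0" if "a < n" for a
      using jnf_mv[OF that v(1), of T] v(3) that unfolding A_def y_def by simp
    let ?c = "complex_of_real (1 / cvnorm n y)"
    have "cvnorm n (\<lambda>b. ?c * y b) = 1" by (rule unit_scale[OF \<open>cvnorm n y \<noteq> 0\<close>])
    moreover have "\<forall>a<n. mv n T (\<lambda>b. ?c * y b) a = 0" unfolding mv_scale using y0 by simp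
    ultimately show ?thesis by blast
  next
    case False
    from det_non_zero_imp_unit[OF A False, of undefined]
    obtain B where B: "B \<in> carrier_mat n n" "A * B = 1\<^sub>m n"
      unfolding Units_def ring_mat_def by auto
    have "\<forall>u. \<exists>y. \<forall>a<n. mv n T y a = u a"
    proof
      fix u
      define w where "w = B *\<^sub>v Matrix.vec n u"
      have w: "w \<in> carrier_vec n" unfolding w_def using B by simp
      have "A *\<^sub>v w = Matrix.vec n u"
        unfolding w_def using B A by (simp add: assoc_mult_mat_vec[symmetric])
      hence "\<forall>a<n. mv n T (\<lambda>b. w $ b) a = u a"
        using jnf_mv[OF _ w, of _ T] unfolding A_def by (metis index_vec)
      thus "\<exists>y. \<forall>a<n. mv n T y a = u a" by blast
    qed
    thus ?thesis by blast
  qed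
qed



lemma blocksum:
  fixes q :: nat
  shows "(\<Sum>b<k*q. g b) = (\<Sum>m<k. \<Sum>i<q. g (m*q+i))"
proof -
  have "(\<Sum>b<k*q. g b) = (\<Sum>m<k. sum g {m*q..<m*q+q})" by (rule sum.nat_group[symmetric])
  also have "\<dots> = (\<Sum>m<k. \<Sum>i<q. g (m*q+i))"
  proof (rule sum.cong[OF refl])
    fix m
    have "sum g {m*q..<m*q+q} = sum g {0 + m*q..<q + m*q}" by (simp add: add.commute)
    also have "\<dots> = (\<Sum>i=0..<q. g (i + m*q))" by (rule sum.shift_bounds_nat_ivl)
    also have "\<dots> = (\<Sum>i<q. g (m*q+i))" by (simp add: atLeast0LessThan add.commute)
    finally show "sum g {m*q..<m*q+q} = (\<Sum>i<q. g (m*q+i))" .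
  qed
  finally show ?thesis .
qed

definition emb :: "nat \<Rightarrow> nat \<Rightarrow> cvec \<Rightarrow> cvec" where
  "emb q j x = (\<lambda>b. if b div q = j then x (b mod q) else 0)"

lemma divmod_block: "0 < q \<Longrightarrow> i < q \<Longrightarrow> (m*q+i) div q = m \<and> (m*q+i) mod q = (i::nat)"
  by simp

lemma cvnorm_emb:
  assumes "j < k" "0 < q"
  shows "cvnorm (k*q) (emb q j x) = cvnorm q x"
proof -
  have "(cvnorm (k*q) (emb q j x))\<^sup>2 = (\<Sum>m<k. \<Sum>i<q. (cmod (emb q j x (m*q+i)))\<^sup>2)"
    unfolding cvnorm_sq by (rule blocksum)
  also have "\<dots> = (\<Sum>m<k. if m = j then (\<Sum>i<q. (cmod (x i))\<^sup>2) else 0)"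
    by (rule sum.cong[OF refl]) (auto simp: emb_def assms)
  also have "\<dots> = (cvnorm q x)\<^sup>2" using assms by (simp add: cvnorm_sq)
  finally show ?thesis by (simp add: power2_eq_iff_nonneg)
qed

lemma mv_bdiag_emb:
  assumes "j < k" "0 < q" "0 < p"
  shows "mv (k*q) (bdiag k p q M) (emb q j x) a = emb p j (mv q (M j) x) a"
proof -
  have "mv (k*q) (bdiag k p q M) (emb q j x) a = (\<Sum>m<k. \<Sum>i<q. bdiag k p q M a (m*q+i) * emb q j x (m*q+i))"
    unfolding mv_def by (rule blocksum)
  also have "\<dots> = (\<Sum>m<k. if m = j then (\<Sum>i<q. (if a div p = j then M j (a mod p) i else 0) * x i) else 0)"
  proof (rule sum.cong[OF refl])
    fix m assume m: "m \<in> {..<k}"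
    show "(\<Sum>i<q. bdiag k p q M a (m*q+i) * emb q j x (m*q+i)) =
      (if m = j then (\<Sum>i<q. (if a div p = j then M j (a mod p) i else 0) * x i) else 0)"
    proof (cases "m = j")
      case True
      show ?thesis unfolding True
        by (simp, rule sum.cong[OF refl]) (use assms in \<open>simp add: bdiag_def emb_def\<close>)
    next
      case False
      have "(\<Sum>i<q. bdiag k p q M a (m*q+i) * emb q j x (m*q+i)) = (\<Sum>i<q. 0)"
        by (rule sum.cong[OF refl]) (use False assms in \<open>simp add: emb_def\<close>)
      thus ?thesis using False by simp
    qed
  qed
  also have "\<dots> = (\<Sum>i<q. (if a div p = j then M j (a mod p) i else 0) * x i)" using assms by simp
  also have "\<dots> = emb p j (mv q (M j) x) a" unfolding emb_def mv_def by auto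
  finally show ?thesis .
qed

lemma mv_bdiag_emb_fun:
  assumes "j < k" "0 < q" "0 < p"
  shows "mv (k*q) (bdiag k p q M) (emb q j x) = emb p j (mv q (M j) x)"
  by (rule ext) (rule mv_bdiag_emb[OF assms])

lemma slice_bnd:
  assumes "j < k" "0 < q" "0 < p"
  shows "bnd p q (M j) (specnorm (bdiag k p q M) (k*p) (k*q))"
  unfolding bnd_def
proof
  fix x
  have kq: "0 < k*q" using assms by simp
  have "cvnorm p (mv q (M j) x) = cvnorm (k*p) (emb p j (mv q (M j) x))"
    using cvnorm_emb[OF assms(1,3)] by simp
  also have "\<dots> = cvnorm (k*p) (mv (k*q) (bdiag k p q M) (emb q j x))"
    using mv_bdiag_emb_fun[OF assms] by simp
  also have "\<dots> \<le> specnorm (bdiag k p q M) (k*p) (k*q) * cvnorm (k*q) (emb q j x)"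
    by (rule bnd_apply[OF specnorm_bnd[OF kq]])
  also have "\<dots> = specnorm (bdiag k p q M) (k*p) (k*q) * cvnorm q x"
    using cvnorm_emb[OF assms(1,2)] by simp
  finally show "cvnorm p (mv q (M j) x) \<le> specnorm (bdiag k p q M) (k*p) (k*q) * cvnorm q x" .
qed

lemma tnorm_slice:
  assumes "j < k" "0 < q" "0 < p"
  shows "bnd p q (fslice k T j) (tnorm k p q T)"
  unfolding tnorm_def tbar_def using slice_bnd[OF assms] .

lemma specnorm_nonneg:
  assumes "0 < q"
  shows "0 \<le> specnorm A p q"
proof -
  have "cvnorm p (mv q A e0) \<le> specnorm A p q * cvnorm q e0" by (rule bnd_apply[OF specnorm_bnd[OF assms]])
  hence "cvnorm p (mv q A e0) \<le> specnorm A p q" using e0_unit[OF assms] by simp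
  thus ?thesis using cvnorm_nonneg[of p "mv q A e0"] by linarith
qed

lemma tnorm_nonneg: "0 < k \<Longrightarrow> 0 < q \<Longrightarrow> 0 \<le> tnorm k p q T"
  unfolding tnorm_def by (rule specnorm_nonneg) simp

lemma isometry_surj:
  assumes "isometry n n V"
  shows "\<exists>y. \<forall>a<n. mv n V y a = u a"
proof -
  have "\<not> (\<exists>y. cvnorm n y = 1 \<and> (\<forall>a<n. mv n V y a = 0))"
  proof
    assume "\<exists>y. cvnorm n y = 1 \<and> (\<forall>a<n. mv n V y a = 0)"
    then obtain y where y: "cvnorm n y = 1" "\<forall>a<n. mv n V y a = 0" by blast
    have "cvnorm n (mv n V y) = 0" using y(2) by (intro cvnorm_zero_vec) auto
    thus False using isometry_norm[OF assms, of y] y(1) by simp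
  qed
  note N = this
  have "\<forall>u. \<exists>y. \<forall>a<n. mv n V y a = u a"
    using square_dich[of n V]
  proof
    assume "\<exists>y. cvnorm n y = 1 \<and> (\<forall>a<n. mv n V y a = 0)"
    with N show ?thesis by contradiction
  qed
  thus ?thesis by (rule allE)
qed

definition Id :: cmat where "Id = (\<lambda>a b. if a = b then 1 else 0)"

lemma mv_Id: "a < n \<Longrightarrow> mv n Id x a = x a"
proof -
  assume a: "a < n"
  have "mv n Id x a = (\<Sum>b<n. if a = b then x b else 0)" unfolding mv_def Id_def by (rule sum.cong) auto
  thus ?thesis using a by simp
qed

lemma isometry_Id: "isometry n n Id"
  unfolding isometry_def
proof (intro allI impI)
  fix a b assume a: "a < n" and b: "b < n"
  have "(\<Sum>c<n. cnj (Id c a) * Id c b) = (\<Sum>c<n. if c = a then (if a = b then 1 else 0) else 0)"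
    unfolding Id_def by (rule sum.cong) auto
  thus "(\<Sum>c<n. cnj (Id c a) * Id c b) = (if a = b then 1 else 0)" using a by simp
qed

lemma tsigma_le:
  assumes "j < k" "0 < r" "0 < n" "cvnorm r e = 1"
  shows "tsigma_min k n r X \<le> cvnorm n (mv r (fslice k X j) e)"
  unfolding tsigma_min_def
proof (rule sigma_le)
  show "0 < r * k" using assms by simp
  show "isometry (k * r) (r * k) Id" using isometry_Id[of "k*r"] by (simp add: mult.commute)
  fix V assume V: "isometry (k * r) (r * k) V"
  hence V': "isometry (k * r) (k * r) V" by (simp add: mult.commute)
  obtain y where y: "\<forall>a<k*r. mv (k*r) V y a = emb r j e a" using isometry_surj[OF V'] by blast
  have "cvnorm (k*r) y = cvnorm (k*r) (mv (k*r) V y)" using isometry_norm[OF V'] by simp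
  also have "\<dots> = cvnorm (k*r) (emb r j e)" using y by (intro cvnorm_cong) auto
  also have "\<dots> = 1" using cvnorm_emb[OF assms(1,2)] assms(4) by simp
  finally have y1: "cvnorm (r*k) y = 1" by (simp add: mult.commute)
  have "cvnorm (k * n) (mv (k * r) (tbar k n r X) (mv (r * k) V y))
      = cvnorm (k * n) (mv (k * r) (tbar k n r X) (emb r j e))"
  proof -
    have "mv (k * r) (tbar k n r X) (mv (r * k) V y) = mv (k * r) (tbar k n r X) (emb r j e)"
      by (rule mv_cong) (use y in \<open>simp add: mult.commute\<close>)
    thus ?thesis by simp
  qed
  also have "\<dots> = cvnorm (k*n) (emb n j (mv r (fslice k X j) e))"
    unfolding tbar_def using mv_bdiag_emb_fun[OF assms(1,2,3)] by simp
  also have "\<dots> = cvnorm n (mv r (fslice k X j) e)" using cvnorm_emb[OF assms(1,3)] by simp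
  finally show "\<exists>y. cvnorm (r * k) y = 1 \<and> cvnorm (k * n) (mv (k * r) (tbar k n r X) (mv (r * k) V y)) \<le> cvnorm n (mv r (fslice k X j) e)"
    using y1 by auto
qed



lemma mv_diff: "mv q A (\<lambda>b. x b - y b) = (\<lambda>a. mv q A x a - mv q A y a)"
  unfolding mv_def by (simp add: right_diff_distrib sum_subtractf)

lemma cinner_sym: "cinner p x y = cnj (cinner p y x)"
  unfolding cinner_def by (simp add: mult.commute)

lemma cinner_adj2: "cinner p (mv q A y) x = cinner q y (mv p (adj A) x)"
proof -
  have "cinner p (mv q A y) x = cnj (cinner p x (mv q A y))" by (rule cinner_sym)
  also have "\<dots> = cnj (cinner q (mv p (adj A) x) y)" by (simp add: cinner_adj)
  also have "\<dots> = cinner q y (mv p (adj A) x)" by (simp add: cinner_sym[of q y])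
  finally show ?thesis .
qed

lemma cinner_scale: "cinner p (\<lambda>a. complex_of_real \<alpha> * x a) (\<lambda>a. complex_of_real \<beta> * y a) = complex_of_real (\<alpha> * \<beta>) * cinner p x y"
  unfolding cinner_def by (simp add: sum_distrib_left ac_simps)

lemma expand2:
  "(cvnorm p (\<lambda>a. complex_of_real \<alpha> * x a + complex_of_real \<beta> * y a))\<^sup>2
     = \<alpha>\<^sup>2 * (cvnorm p x)\<^sup>2 + 2 * \<alpha> * \<beta> * Re (cinner p x y) + \<beta>\<^sup>2 * (cvnorm p y)\<^sup>2"
  using cvnorm_sq_add[of p "\<lambda>a. complex_of_real \<alpha> * x a" "\<lambda>a. complex_of_real \<beta> * y a"]
  unfolding cinner_scale cvnorm_scale
  by (simp add: power_mult_distrib)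

lemma adj_bound:
  assumes "\<And>x. cvnorm m (T x) \<le> K * cvnorm r x"
    and "\<And>x q. cinner r x (T' q) = cinner m (T x) q" and "0 \<le> K"
  shows "cvnorm r (T' q) \<le> K * cvnorm m q"
proof -
  let ?y = "T' q"
  have "(cvnorm r ?y)\<^sup>2 = Re (cinner r ?y ?y)" by (simp add: Re_cinner_self)
  also have "\<dots> = Re (cinner m (T ?y) q)" by (simp add: assms(2))
  also have "\<dots> \<le> cvnorm m (T ?y) * cvnorm m q" by (rule Re_cinner_CS)
  also have "\<dots> \<le> K * cvnorm r ?y * cvnorm m q"
    by (intro mult_right_mono assms(1)) simp
  finally have *: "(cvnorm r ?y)\<^sup>2 \<le> K * cvnorm m q * cvnorm r ?y" by (simp add: ac_simps)
  show ?thesis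
  proof (cases "cvnorm r ?y = 0")
    case True thus ?thesis using assms(3) by simp
  next
    case False
    hence "0 < cvnorm r ?y" using cvnorm_nonneg[of r ?y] by linarith
    thus ?thesis using * by (simp add: power2_eq_square)
  qed
qed

lemma inner_lower:
  assumes "A * (cvnorm p u)\<^sup>2 \<le> Re (cinner p u h)"
  shows "A * cvnorm p u \<le> cvnorm p h"
proof (cases "cvnorm p u = 0")
  case True thus ?thesis by simp
next
  case False
  hence pos: "0 < cvnorm p u" using cvnorm_nonneg[of p u] by linarith
  have "A * (cvnorm p u)\<^sup>2 \<le> cvnorm p u * cvnorm p h" using assms Re_cinner_CS[of p u h] by linarith
  thus ?thesis using pos by (simp add: power2_eq_square)
qed

lemma lemmaA:
  fixes M :: cmat and r :: nat and s0 L3 \<mu> :: real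
  assumes low: "\<And>x. s0 * cvnorm r x \<le> cvnorm r (mv r M x)"
    and up: "bnd r r M L3"
    and s0: "0 \<le> s0" and mu: "0 \<le> \<mu>" and small: "\<mu> * L3\<^sup>2 \<le> 1/10"
    and y: "cvnorm r y = 1" and L3: "0 < L3"
  shows "s0 * (1 - \<mu> * s0\<^sup>2) \<le> cvnorm r (mv r M (\<lambda>b. y b - complex_of_real \<mu> * mv r (adj M) (mv r M y) b))"
proof -
  define Ny where "Ny = mv r (adj M) (mv r M y)"
  define p1 where "p1 = (cvnorm r (mv r M y))\<^sup>2"
  define p2 where "p2 = (cvnorm r Ny)\<^sup>2"
  define p3 where "p3 = (cvnorm r (mv r M Ny))\<^sup>2"
  define a where "a = s0\<^sup>2"
  define K0 where "K0 = L3\<^sup>2"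
  have K0: "0 < K0" unfolding K0_def using L3 by simp
  have i1: "Re (cinner r y Ny) = p1"
  proof -
    have "cinner r y Ny = cinner r (mv r M y) (mv r M y)"
      unfolding Ny_def using cinner_adj[of r y r "adj M" "mv r M y"] by simp
    thus ?thesis unfolding p1_def by (simp add: Re_cinner_self)
  qed
  have i2: "Re (cinner r (mv r M y) (mv r M Ny)) = p2"
  proof -
    have "cinner r (mv r M y) (mv r M Ny) = cinner r Ny Ny"
      unfolding Ny_def using cinner_adj[of r "mv r M y" r M Ny] by (simp add: Ny_def)
    thus ?thesis unfolding p2_def by (simp add: Re_cinner_self)
  qed
  have gen: "a * (\<alpha>\<^sup>2 + 2 * \<alpha> * \<beta> * p1 + \<beta>\<^sup>2 * p2) \<le> \<alpha>\<^sup>2 * p1 + 2 * \<alpha> * \<beta> * p2 + \<beta>\<^sup>2 * p3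
      \<and> \<alpha>\<^sup>2 * p1 + 2 * \<alpha> * \<beta> * p2 + \<beta>\<^sup>2 * p3 \<le> K0 * (\<alpha>\<^sup>2 + 2 * \<alpha> * \<beta> * p1 + \<beta>\<^sup>2 * p2)" for \<alpha> \<beta>
  proof -
    define x where "x = (\<lambda>b. complex_of_real \<alpha> * y b + complex_of_real \<beta> * Ny b)"
    have nx: "(cvnorm r x)\<^sup>2 = \<alpha>\<^sup>2 + 2 * \<alpha> * \<beta> * p1 + \<beta>\<^sup>2 * p2"
      unfolding x_def expand2 i1 y p2_def by simp
    have "mv r M x = (\<lambda>a. complex_of_real \<alpha> * mv r M y a + complex_of_real \<beta> * mv r M Ny a)"
      unfolding x_def mv_add mv_scale by simp
    hence nMx: "(cvnorm r (mv r M x))\<^sup>2 = \<alpha>\<^sup>2 * p1 + 2 * \<alpha> * \<beta> * p2 + \<beta>\<^sup>2 * p3"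
      using expand2[of r \<alpha> "mv r M y" \<beta> "mv r M Ny"] i2 unfolding p1_def p3_def by simp
    have "s0 * cvnorm r x \<le> cvnorm r (mv r M x)" by (rule low)
    hence "(s0 * cvnorm r x)\<^sup>2 \<le> (cvnorm r (mv r M x))\<^sup>2" using s0 by (intro power_mono) auto
    hence A1: "a * (cvnorm r x)\<^sup>2 \<le> (cvnorm r (mv r M x))\<^sup>2" unfolding a_def by (simp add: power_mult_distrib)
    have "cvnorm r (mv r M x) \<le> L3 * cvnorm r x" by (rule bnd_apply[OF up])
    hence "(cvnorm r (mv r M x))\<^sup>2 \<le> (L3 * cvnorm r x)\<^sup>2" by (intro power_mono) auto
    hence A2: "(cvnorm r (mv r M x))\<^sup>2 \<le> K0 * (cvnorm r x)\<^sup>2" unfolding K0_def by (simp add: power_mult_distrib)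
    show ?thesis using A1 A2 unfolding nx nMx by simp
  qed
  have aK: "a \<le> K0"
  proof -
    have "s0 \<le> L3"
      using low[of y] bnd_apply[OF up, of y] y by simp
    thus ?thesis unfolding a_def K0_def using s0 by (intro power_mono) auto
  qed
  have a0: "0 \<le> a" unfolding a_def by simp
  define c1 where "c1 = p1 - a"
  define c2 where "c2 = p2 - 2 * a * p1 + a\<^sup>2"
  define c3 where "c3 = p3 - 3 * a * p2 + 3 * a\<^sup>2 * p1 - a ^ 3"
  have c1: "0 \<le> c1" using gen[of 1 0] unfolding c1_def by simp
  have c2: "0 \<le> c2"
  proof -
    have "0 \<le> (cvnorm r (\<lambda>b. complex_of_real (- a) * y b + complex_of_real 1 * Ny b))\<^sup>2" by simp
    also have "\<dots> = c2" unfolding expand2 i1 y c2_def p2_def by (simp add: power2_eq_square)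
    finally show ?thesis .
  qed
  have g2: "a * ((- a)\<^sup>2 + 2 * (- a) * 1 * p1 + 1\<^sup>2 * p2) \<le> (- a)\<^sup>2 * p1 + 2 * (- a) * 1 * p2 + 1\<^sup>2 * p3
      \<and> (- a)\<^sup>2 * p1 + 2 * (- a) * 1 * p2 + 1\<^sup>2 * p3 \<le> K0 * ((- a)\<^sup>2 + 2 * (- a) * 1 * p1 + 1\<^sup>2 * p2)"
    by (rule gen)
  have c3: "0 \<le> c3" using g2 unfolding c3_def by (simp add: power2_eq_square power3_eq_cube algebra_simps)
  have c3u: "c3 \<le> K0 * c2"
  proof -
    have "c3 \<le> (K0 - a) * c2" using g2 unfolding c3_def c2_def by (simp add: power2_eq_square power3_eq_cube algebra_simps)
    also have "\<dots> \<le> K0 * c2" using a0 c2 by (simp add: algebra_simps)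
    finally show ?thesis .
  qed
  define t where "t = 1 / K0"
  have g3: "a * ((1 + t * a)\<^sup>2 + 2 * (1 + t * a) * (- t) * p1 + (- t)\<^sup>2 * p2) \<le> (1 + t * a)\<^sup>2 * p1 + 2 * (1 + t * a) * (- t) * p2 + (- t)\<^sup>2 * p3"
    using gen[of "1 + t * a" "- t"] by blast
  have "0 \<le> c1 - 2 * t * c2 + t\<^sup>2 * c3"
    using g3 unfolding c1_def c2_def c3_def by (simp add: power2_eq_square power3_eq_cube algebra_simps)
  also have "t\<^sup>2 * c3 \<le> t * c2"
  proof -
    have "t\<^sup>2 * c3 \<le> t\<^sup>2 * (K0 * c2)" using c3u by (intro mult_left_mono) auto
    also have "\<dots> = t * c2" unfolding t_def using K0 by (simp add: power2_eq_square)
    finally show ?thesis .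
  qed
  finally have "0 \<le> c1 - 2 * t * c2 + t * c2" by simp
  hence c21: "c2 \<le> K0 * c1" unfolding t_def using K0 by (simp add: field_simps)
  define \<alpha>0 where "\<alpha>0 = 1 - 4 * \<mu> * a + 3 * \<mu>\<^sup>2 * a\<^sup>2"
  define \<beta>0 where "\<beta>0 = - 2 * \<mu> + 3 * \<mu>\<^sup>2 * a"
  have muK: "\<mu> * K0 \<le> 1/10" using small unfolding K0_def by simp
  have mua: "\<mu> * a \<le> 1/10" using muK aK mu by (meson mult_left_mono order_trans)
  have b0: "\<beta>0 \<le> 0"
  proof -
    have "3 * \<mu>\<^sup>2 * a = 3 * \<mu> * (\<mu> * a)" by (simp add: power2_eq_square)
    also have "\<dots> \<le> 3 * \<mu> * (1/10)" using mua mu by (intro mult_left_mono) auto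
    finally have "3 * \<mu>\<^sup>2 * a \<le> 3 * \<mu> * (1/10)" .
    thus ?thesis unfolding \<beta>0_def using mu by linarith
  qed
  have ab: "0 \<le> \<alpha>0 + \<beta>0 * K0"
  proof -
    have "\<beta>0 * K0 \<ge> - 2 * \<mu> * K0" unfolding \<beta>0_def using mu a0 K0 by (simp add: algebra_simps)
    moreover have "\<alpha>0 \<ge> 1 - 4 * \<mu> * a" unfolding \<alpha>0_def by simp
    ultimately show ?thesis using muK mua by linarith
  qed
  have key: "p1 - 2 * \<mu> * p2 + \<mu>\<^sup>2 * p3 - a * (1 - \<mu> * a)\<^sup>2 = \<alpha>0 * c1 + \<beta>0 * c2 + \<mu>\<^sup>2 * c3"
    unfolding \<alpha>0_def \<beta>0_def c1_def c2_def c3_def by (simp add: power2_eq_square power3_eq_cube algebra_simps)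
  have "\<beta>0 * c2 \<ge> \<beta>0 * (K0 * c1)" using b0 c21 by (simp add: mult_left_mono_neg)
  hence "\<alpha>0 * c1 + \<beta>0 * c2 + \<mu>\<^sup>2 * c3 \<ge> (\<alpha>0 + \<beta>0 * K0) * c1"
  proof -
    have "0 \<le> \<mu>\<^sup>2 * c3" using c3 by simp
    thus ?thesis using \<open>\<beta>0 * c2 \<ge> \<beta>0 * (K0 * c1)\<close> by (simp add: algebra_simps)
  qed
  moreover have "(\<alpha>0 + \<beta>0 * K0) * c1 \<ge> 0" using ab c1 by simp
  ultimately have P: "a * (1 - \<mu> * a)\<^sup>2 \<le> p1 - 2 * \<mu> * p2 + \<mu>\<^sup>2 * p3" using key by linarith
  have "mv r M (\<lambda>b. y b - complex_of_real \<mu> * mv r (adj M) (mv r M y) b)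
      = (\<lambda>b. complex_of_real 1 * mv r M y b + complex_of_real (- \<mu>) * mv r M Ny b)"
    unfolding mv_diff mv_scale Ny_def by simp
  hence "(cvnorm r (mv r M (\<lambda>b. y b - complex_of_real \<mu> * mv r (adj M) (mv r M y) b)))\<^sup>2 = p1 - 2 * \<mu> * p2 + \<mu>\<^sup>2 * p3"
    using expand2[of r 1 "mv r M y" "- \<mu>" "mv r M Ny"] i2 unfolding p1_def p3_def by simp
  hence "(s0 * (1 - \<mu> * s0\<^sup>2))\<^sup>2 \<le> (cvnorm r (mv r M (\<lambda>b. y b - complex_of_real \<mu> * mv r (adj M) (mv r M y) b)))\<^sup>2"
    using P unfolding a_def by (simp add: power_mult_distrib)
  thus ?thesis by (rule power2_le_imp_le) simp
qed



lemma adj_mm: "adj (mm q A B) = mm q (adj B) (adj A)"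
  unfolding adj_def mm_def by (simp add: mult.commute)

lemma mv_box: "(\<And>b. b < q \<Longrightarrow> A a b = B a b) \<Longrightarrow> mv q A x a = mv q B x a"
  by (rule mv_cong_mat)

lemma L_decomp:
  assumes PP: "\<forall>a<n. \<forall>b<n. mm n' P (adj P) a b = Id a b - mm r V (adj V) a b" and a: "a < n"
  shows "v a = mv r V (mv n (adj V) v) a + mv n' P (mv n (adj P) v) a"
proof -
  have "mv n' P (mv n (adj P) v) a = mv n (mm n' P (adj P)) v a" by (simp add: mv_mm)
  also have "\<dots> = mv n (\<lambda>a b. Id a b - mm r V (adj V) a b) v a" using PP a by (intro mv_box) auto
  also have "\<dots> = mv n Id v a - mv n (mm r V (adj V)) v a"
    unfolding mv_def by (simp add: left_diff_distrib sum_subtractf)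
  also have "\<dots> = v a - mv r V (mv n (adj V) v) a" using a by (simp add: mv_Id mv_mm)
  finally show ?thesis by simp
qed

lemma L_decomp_norm:
  assumes PP: "\<forall>a<n. \<forall>b<n. mm n' P (adj P) a b = Id a b - mm r V (adj V) a b"
  shows "(cvnorm n v)\<^sup>2 = (cvnorm r (mv n (adj V) v))\<^sup>2 + (cvnorm n' (mv n (adj P) v))\<^sup>2"
proof -
  have "cinner n v v = cinner n v (\<lambda>a. mv r V (mv n (adj V) v) a + mv n' P (mv n (adj P) v) a)"
    by (rule cinner_cong) (auto intro: L_decomp[OF PP])
  also have "\<dots> = cinner n v (mv r V (mv n (adj V) v)) + cinner n v (mv n' P (mv n (adj P) v))"
    unfolding cinner_def by (simp add: distrib_left sum.distrib)
  also have "\<dots> = cinner r (mv n (adj V) v) (mv n (adj V) v) + cinner n' (mv n (adj P) v) (mv n (adj P) v)"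
    by (simp add: cinner_adj)
  finally have "cinner n v v = cinner r (mv n (adj V) v) (mv n (adj V) v) + cinner n' (mv n (adj P) v) (mv n (adj P) v)" .
  hence "Re (cinner n v v) = Re (cinner r (mv n (adj V) v) (mv n (adj V) v)) + Re (cinner n' (mv n (adj P) v) (mv n (adj P) v))"
    by simp
  thus ?thesis by (simp add: Re_cinner_self)
qed

lemma L_adjX:
  assumes XVB: "\<forall>a<n. \<forall>b<r. X a b = mm r V B a b" and b: "b < r"
  shows "mv n (adj X) u b = mv r (adj B) (mv n (adj V) u) b"
proof -
  have "mv n (adj X) u b = mv n (adj (mm r V B)) u b"
    using XVB b by (intro mv_box) (simp add: adj_def)
  also have "\<dots> = mv r (adj B) (mv n (adj V) u) b" by (simp add: adj_mm mv_mm)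
  finally show ?thesis .
qed

lemma L_Xmv:
  assumes XVB: "\<forall>a<n. \<forall>b<r. X a b = mm r V B a b" and a: "a < n"
  shows "mv r X e a = mv r V (mv r B e) a"
proof -
  have "mv r X e a = mv r (mm r V B) e a" using XVB a by (intro mv_box) simp
  thus ?thesis by (simp add: mv_mm)
qed

lemma L_VU:
  assumes VU: "\<forall>a<r. \<forall>b<R. mm n (adj V) U a b = mm r Mt (adj W) a b" and a: "a < r"
  shows "mv n (adj V) (mv R U u) a = mv r Mt (mv R (adj W) u) a"
proof -
  have "mv n (adj V) (mv R U u) a = mv R (mm n (adj V) U) u a" by (simp add: mv_mm)
  also have "\<dots> = mv R (mm r Mt (adj W)) u a" using VU a by (intro mv_box) simp
  also have "\<dots> = mv r Mt (mv R (adj W) u) a" by (simp add: mv_mm)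
  finally show ?thesis .
qed

lemma isometry_bnd: "isometry q i V \<Longrightarrow> bnd q i V 1"
  unfolding bnd_def using isometry_norm by simp

lemma isometry_adj_bnd: "isometry q i V \<Longrightarrow> bnd i q (adj V) 1"
  by (rule bnd_adj[OF isometry_bnd]) auto

lemma L_B:
  assumes XVB: "\<forall>a<n. \<forall>b<r. X a b = mm r V B a b" and isoV: "isometry n r V"
  shows "cvnorm r (mv r B e) = cvnorm n (mv r X e)"
proof -
  have "cvnorm n (mv r X e) = cvnorm n (mv r V (mv r B e))"
    by (rule cvnorm_cong) (rule L_Xmv[OF XVB])
  thus ?thesis using isometry_norm[OF isoV] by simp
qed

lemma L_Blow:
  assumes low: "\<And>e. \<sigma> * cvnorm r e \<le> cvnorm r (mv r B e)" and sig: "0 < \<sigma>"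
  shows "\<sigma> * cvnorm r z \<le> cvnorm r (mv r (adj B) z)"
proof -
  have "\<not> (\<exists>y. cvnorm r y = 1 \<and> (\<forall>a<r. mv r B y a = 0))"
  proof
    assume "\<exists>y. cvnorm r y = 1 \<and> (\<forall>a<r. mv r B y a = 0)"
    then obtain y where y: "cvnorm r y = 1" "\<forall>a<r. mv r B y a = 0" by blast
    have "cvnorm r (mv r B y) = 0" using y(2) by (intro cvnorm_zero_vec) auto
    thus False using low[of y] y(1) sig by simp
  qed
  note N = this
  have "\<forall>u. \<exists>y. \<forall>a<r. mv r B y a = u a"
    using square_dich[of r B]
  proof
    assume "\<exists>y. cvnorm r y = 1 \<and> (\<forall>a<r. mv r B y a = 0)"
    with N show ?thesis by contradiction
  qed
  then obtain e where e: "\<forall>a<r. mv r B e a = z a" by blast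
  have ze: "cvnorm r z = cvnorm r (mv r B e)" using e by (intro cvnorm_cong) auto
  have "(cvnorm r z)\<^sup>2 = Re (cinner r z (mv r B e))"
  proof -
    have "cinner r z z = cinner r z (mv r B e)" by (rule cinner_cong) (use e in auto)
    thus ?thesis by (simp add: Re_cinner_self[symmetric])
  qed
  also have "\<dots> = Re (cinner r (mv r (adj B) z) e)" by (simp add: cinner_adj)
  also have "\<dots> \<le> cvnorm r (mv r (adj B) z) * cvnorm r e" by (rule Re_cinner_CS)
  finally have A: "(cvnorm r z)\<^sup>2 \<le> cvnorm r (mv r (adj B) z) * cvnorm r e" .
  have "\<sigma> * cvnorm r e \<le> cvnorm r z" using low[of e] ze by simp
  hence "\<sigma> * (cvnorm r z)\<^sup>2 \<le> cvnorm r (mv r (adj B) z) * (\<sigma> * cvnorm r e)"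
    using A sig by (metis cvnorm_nonneg mult.left_commute mult_left_mono less_imp_le)
  also have "\<dots> \<le> cvnorm r (mv r (adj B) z) * cvnorm r z"
    using \<open>\<sigma> * cvnorm r e \<le> cvnorm r z\<close> by (intro mult_left_mono) auto
  finally have *: "\<sigma> * (cvnorm r z)\<^sup>2 \<le> cvnorm r (mv r (adj B) z) * cvnorm r z" .
  show ?thesis
  proof (cases "cvnorm r z = 0")
    case True thus ?thesis by simp
  next
    case False
    hence "0 < cvnorm r z" using cvnorm_nonneg[of r z] by linarith
    thus ?thesis using * by (simp add: power2_eq_square)
  qed
qed



lemma core:
  fixes n r R s n' :: nat and V X B P U W Mt Y Q E G :: cmat and \<mu> L \<sigma> \<delta> s0 :: real
  assumes r: "0 < r" and n: "0 < n"
    and isoV: "isometry n r V"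
    and XVB: "\<forall>a<n. \<forall>b<r. X a b = mm r V B a b"
    and Xlow: "\<And>e. \<sigma> * cvnorm r e \<le> cvnorm n (mv r X e)"
    and Xup: "bnd n r X L"
    and PP: "\<forall>a<n. \<forall>b<n. mm n' P (adj P) a b = Id a b - mm r V (adj V) a b"
    and VU: "\<forall>a<r. \<forall>b<R. mm n (adj V) U a b = mm r Mt (adj W) a b"
    and isoW: "isometry R r W"
    and UWY: "\<forall>a<n. \<forall>b<r. mm R U W a b = mm s Y Q a b"
    and isoY: "isometry n s Y"
    and PY: "bnd n' s (mm n (adj P) Y) \<delta>"
    and Ub: "bnd n R U (3 * L)"
    and Eb: "bnd n n E (1/100 * \<sigma>\<^sup>2)"
    and Gdef: "\<And>u a. a < n \<Longrightarrow> mv R G u a = mv R U u a + complex_of_real \<mu> *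
        (mv r X (mv n (adj X) (mv R U u)) a - mv R U (mv n (adj U) (mv R U u)) a + mv n E (mv R U u) a)"
    and Mlow: "\<And>x. s0 * cvnorm r x \<le> cvnorm r (mv n (adj V) (mv R U (mv r W x)))"
    and sig: "0 < \<sigma>" "\<sigma> \<le> L"
    and mu: "0 < \<mu>" "\<mu> * L ^ 4 \<le> 1/100 * \<sigma>\<^sup>2"
    and del: "0 \<le> \<delta>" "\<delta> * L \<le> 1/100 * \<sigma>"
    and s0: "0 \<le> s0"
    and y: "cvnorm r y = 1"
  shows "s0 * (1 + 1/4 * \<mu> * \<sigma>\<^sup>2 - \<mu> * s0\<^sup>2) \<le> cvnorm r (mv n (adj V) (mv R G (mv r W y)))"
proof -
  have L: "0 < L" using sig by linarith
  have muL2: "\<mu> * L\<^sup>2 \<le> 1/100"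
  proof -
    have "\<mu> * L\<^sup>2 * L\<^sup>2 = \<mu> * L ^ 4" by (simp add: power2_eq_square power4_eq_xxxx)
    also have "\<dots> \<le> 1/100 * \<sigma>\<^sup>2" by (rule mu(2))
    also have "\<dots> \<le> 1/100 * L\<^sup>2" using sig by (intro mult_left_mono power_mono) auto
    finally show ?thesis using L by simp
  qed
  have musig: "\<mu> * \<sigma>\<^sup>2 \<le> \<mu> * L\<^sup>2" using sig mu by (intro mult_left_mono power_mono) auto
  have del1: "\<delta> \<le> 1/100"
  proof -
    have "\<delta> * L \<le> 1/100 * L" using del sig by linarith
    thus ?thesis using L by simp
  qed
  define M where "M = mm R (mm n (adj V) U) W"
  have hM: "mv r M x = mv n (adj V) (mv R U (mv r W x))" for x unfolding M_def by (simp add: mv_mm)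
  have hMadj: "mv r (adj M) z = mv R (adj W) (mv n (adj U) (mv r V z))" for z
    unfolding M_def by (simp add: adj_mm mv_mm)
  have bV: "bnd r n (adj V) 1" by (rule isometry_adj_bnd[OF isoV])
  have bW: "bnd R r W 1" by (rule isometry_bnd[OF isoW])
  have bM: "bnd r r M (3 * L)"
  proof -
    have "bnd r R (mm n (adj V) U) (1 * (3 * L))" by (rule bnd_mm[OF bV Ub]) simp
    hence "bnd r r M (1 * (3 * L) * 1)" unfolding M_def by (rule bnd_mm[OF _ bW]) (use L in simp)
    thus ?thesis by simp
  qed
  have bMadj: "bnd r r (adj M) (3 * L)" by (rule bnd_adj[OF bM]) (use L in simp)
  have MMt: "mv r M x b = mv r Mt x b" if b: "b < r" for x b
  proof -
    have "mv r M x b = mv r Mt (mv R (adj W) (mv r W x)) b" unfolding hM by (rule L_VU[OF VU b])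
    also have "\<dots> = mv r Mt x b" by (rule arg_cong[where f = "\<lambda>f. f b"], rule mv_cong) (rule isometry_inv[OF isoW])
    finally show ?thesis .
  qed
  have bB: "bnd r r B L" unfolding bnd_def using L_B[OF XVB isoV] bnd_apply[OF Xup] by simp
  have lowB: "\<sigma> * cvnorm r e \<le> cvnorm r (mv r B e)" for e using L_B[OF XVB isoV] Xlow by simp
  have lowBa: "\<sigma> * cvnorm r z \<le> cvnorm r (mv r (adj B) z)" for z by (rule L_Blow[OF lowB sig(1)])
  have bBa: "bnd r r (adj B) L" by (rule bnd_adj[OF bB]) (use L in simp)
  have PUW: "cvnorm n' (mv n (adj P) (mv R U (mv r W x))) \<le> \<delta> * cvnorm n (mv R U (mv r W x))" for x
  proof -
    have e1: "mv R U (mv r W x) a = mv s Y (mv r Q x) a" if a: "a < n" for a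
    proof -
      have "mv R U (mv r W x) a = mv r (mm R U W) x a" by (simp add: mv_mm)
      also have "\<dots> = mv r (mm s Y Q) x a" using UWY a by (intro mv_box) simp
      finally show ?thesis by (simp add: mv_mm)
    qed
    have "cvnorm n (mv R U (mv r W x)) = cvnorm n (mv s Y (mv r Q x))" by (rule cvnorm_cong) (rule e1)
    hence n1: "cvnorm n (mv R U (mv r W x)) = cvnorm s (mv r Q x)" using isometry_norm[OF isoY] by simp
    have "mv n (adj P) (mv R U (mv r W x)) = mv n (adj P) (mv s Y (mv r Q x))" by (rule mv_cong) (rule e1)
    also have "\<dots> = mv s (mm n (adj P) Y) (mv r Q x)" by (simp add: mv_mm)
    finally have "cvnorm n' (mv n (adj P) (mv R U (mv r W x))) = cvnorm n' (mv s (mm n (adj P) Y) (mv r Q x))" by simp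
    also have "\<dots> \<le> \<delta> * cvnorm s (mv r Q x)" by (rule bnd_apply[OF PY])
    finally show ?thesis using n1 by simp
  qed
  have bUW: "cvnorm n (mv R U (mv r W x)) \<le> 3 * L * cvnorm r x" for x
  proof -
    have "cvnorm n (mv R U (mv r W x)) \<le> 3 * L * cvnorm R (mv r W x)" by (rule bnd_apply[OF Ub])
    thus ?thesis using isometry_norm[OF isoW] by simp
  qed
  define Wy where "Wy = mv r W y"
  define v where "v = mv R U Wy"
  define z where "z = mv n (adj V) v"
  define q where "q = mv n (adj P) v"
  have zM: "z = mv r M y" unfolding z_def v_def Wy_def hM by simp
  have nv: "(cvnorm n v)\<^sup>2 = (cvnorm r z)\<^sup>2 + (cvnorm n' q)\<^sup>2" unfolding z_def q_def by (rule L_decomp_norm[OF PP])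
  have nq: "cvnorm n' q \<le> \<delta> * cvnorm n v" unfolding q_def v_def Wy_def by (rule PUW)
  have nv2: "cvnorm n v \<le> 2 * cvnorm r z"
  proof -
    have "(cvnorm n' q)\<^sup>2 \<le> (\<delta> * cvnorm n v)\<^sup>2" using nq by (intro power_mono) auto
    also have "\<dots> \<le> (1/100 * cvnorm n v)\<^sup>2" using del del1 by (intro power_mono mult_right_mono) auto
    finally have A0: "(cvnorm n' q)\<^sup>2 \<le> (1/100 * cvnorm n v)\<^sup>2" .
    have "(1/100 * cvnorm n v)\<^sup>2 = 1/10000 * (cvnorm n v)\<^sup>2" by (simp add: power2_eq_square)
    hence A: "(cvnorm n' q)\<^sup>2 \<le> 1/10000 * (cvnorm n v)\<^sup>2" using A0 by linarith
    have "0 \<le> (cvnorm r z)\<^sup>2" by simp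
    hence "(cvnorm n v)\<^sup>2 \<le> 4 * (cvnorm r z)\<^sup>2" using A nv by linarith
    hence "(cvnorm n v)\<^sup>2 \<le> (2 * cvnorm r z)\<^sup>2" by (simp add: power_mult_distrib)
    thus ?thesis by (rule power2_le_imp_le) simp
  qed
  have s0z: "s0 \<le> cvnorm r z" using Mlow[of y] y unfolding z_def v_def Wy_def by simp
  have s0L: "s0 \<le> 3 * L"
  proof -
    have "cvnorm r z \<le> 3 * L" using bnd_apply[OF bM, of y] y zM by simp
    thus ?thesis using s0z by linarith
  qed

  define f where "f = mv r X (mv n (adj X) v)"
  define g where "g = mv R U (mv n (adj U) v)"
  define h where "h = mv n E v"
  define w where "w = mv n (adj V) (mv R G Wy)"
  define cm where "cm = complex_of_real \<mu>"
  have W1: "w = (\<lambda>b. z b + cm * (mv n (adj V) f b - mv n (adj V) g b + mv n (adj V) h b))"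
  proof -
    have "w = mv n (adj V) (\<lambda>a. v a + cm * (f a - g a + h a))"
      unfolding w_def by (rule mv_cong) (simp add: Gdef f_def g_def h_def v_def cm_def)
    thus ?thesis unfolding z_def by (simp add: mv_add mv_scale mv_diff)
  qed
  define BBz where "BBz = mv r B (mv r (adj B) z)"
  have W2: "mv n (adj V) f b = BBz b" if b: "b < r" for b
  proof -
    define xi where "xi = mv n (adj X) v"
    have "mv n (adj V) f = mv n (adj V) (mv r V (mv r B xi))"
      unfolding f_def xi_def by (rule mv_cong) (rule L_Xmv[OF XVB])
    hence "mv n (adj V) f b = mv r B xi b" using isometry_inv[OF isoV b] by simp
    also have "mv r B xi = BBz" unfolding BBz_def xi_def z_def
      by (rule mv_cong) (rule L_adjX[OF XVB])
    finally show ?thesis .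
  qed
  define r1 where "r1 = mv R (adj W) (mv n (adj U) (mv n' P q))"
  define m where "m = mv r M (mv r (adj M) z)"
  define Mr1 where "Mr1 = mv r M r1"
  have W3: "mv n (adj V) g b = m b + Mr1 b" if b: "b < r" for b
  proof -
    define g' where "g' = mv n (adj U) v"
    have "mv n (adj V) g b = mv r Mt (mv R (adj W) g') b" unfolding g_def g'_def by (rule L_VU[OF VU b])
    also have "\<dots> = mv r M (mv R (adj W) g') b" using MMt[OF b] by simp
    also have "mv R (adj W) g' = (\<lambda>b. mv r (adj M) z b + r1 b)"
    proof -
      have "g' = mv n (adj U) (\<lambda>a. mv r V z a + mv n' P q a)"
        unfolding g'_def z_def q_def by (rule mv_cong) (rule L_decomp[OF PP])
      thus ?thesis unfolding r1_def hMadj by (simp add: mv_add)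
    qed
    also have "mv r M (\<lambda>b. mv r (adj M) z b + r1 b) b = m b + Mr1 b"
      unfolding m_def Mr1_def by (simp add: mv_add)
    finally show ?thesis .
  qed
  define Vh where "Vh = mv n (adj V) h"
  have W4: "w b = z b + cm * (BBz b - (m b + Mr1 b) + Vh b)" if b: "b < r" for b
    using W1 W2[OF b] W3[OF b] unfolding Vh_def by simp
  define u where "u = (\<lambda>b. z b - cm * m b)"
  have uA: "s0 * (1 - \<mu> * s0\<^sup>2) \<le> cvnorm r u"
  proof -
    have "s0 * (1 - \<mu> * s0\<^sup>2) \<le> cvnorm r (mv r M (\<lambda>b. y b - complex_of_real \<mu> * mv r (adj M) (mv r M y) b))"
    proof (rule lemmaA[OF _ bM s0 _ _ y])
      show "s0 * cvnorm r x \<le> cvnorm r (mv r M x)" for x using Mlow[of x] hM by simp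
      show "0 \<le> \<mu>" using mu by simp
      show "0 < 3 * L" using L by simp
      show "\<mu> * (3 * L)\<^sup>2 \<le> 1 / 10" using muL2 by (simp add: power_mult_distrib)
    qed
    also have "mv r M (\<lambda>b. y b - complex_of_real \<mu> * mv r (adj M) (mv r M y) b) = u"
      unfolding u_def m_def cm_def zM by (simp add: mv_diff mv_scale)
    finally show ?thesis .
  qed
  have nm: "cvnorm r m \<le> 9 * L\<^sup>2 * cvnorm r z"
  proof -
    have "cvnorm r m \<le> 3 * L * cvnorm r (mv r (adj M) z)" unfolding m_def by (rule bnd_apply[OF bM])
    also have "\<dots> \<le> 3 * L * (3 * L * cvnorm r z)" using L by (intro mult_left_mono bnd_apply[OF bMadj]) auto
    finally show ?thesis by (simp add: power2_eq_square)
  qed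
  have uB: "(1 - 9 * \<mu> * L\<^sup>2) * cvnorm r z \<le> cvnorm r u"
  proof -
    have "cvnorm r z - cvnorm r (\<lambda>b. - cm * m b) \<le> cvnorm r (\<lambda>b. z b + - cm * m b)" by (rule cvnorm_diff_ge)
    moreover have "cvnorm r (\<lambda>b. - cm * m b) = \<mu> * cvnorm r m"
      using cvnorm_scale[of r "- cm" m] mu unfolding cm_def by simp
    moreover have "(\<lambda>b. z b + - cm * m b) = u" unfolding u_def by simp
    ultimately have "cvnorm r z - \<mu> * cvnorm r m \<le> cvnorm r u" by simp
    moreover have "\<mu> * cvnorm r m \<le> \<mu> * (9 * L\<^sup>2 * cvnorm r z)" using nm mu by (intro mult_left_mono) auto
    ultimately show ?thesis by (simp add: algebra_simps)
  qed
  define BBu where "BBu = mv r B (mv r (adj B) u)"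
  define BBm where "BBm = mv r B (mv r (adj B) m)"
  have BBu_eq: "BBu = (\<lambda>b. BBz b - cm * BBm b)"
    unfolding BBu_def BBz_def BBm_def u_def by (simp add: mv_diff mv_scale)
  define h1 where "h1 = (\<lambda>b. u b + cm * BBu b)"
  define err where "err = (\<lambda>b. cm * cm * BBm b - cm * Mr1 b + cm * Vh b)"
  have wsum: "cvnorm r w = cvnorm r (\<lambda>b. h1 b + err b)"
  proof (rule cvnorm_cong)
    fix b assume b: "b < r"
    show "w b = h1 b + err b" unfolding W4[OF b] h1_def err_def BBu_eq u_def by (simp add: algebra_simps)
  qed
  have h1low: "(1 + \<mu> * \<sigma>\<^sup>2) * cvnorm r u \<le> cvnorm r h1"
  proof (rule inner_lower)
    have "cinner r u h1 = cinner r u u + cm * cinner r u BBu"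
      unfolding h1_def cinner_def by (simp add: distrib_left sum.distrib sum_distrib_left ac_simps)
    also have "cinner r u BBu = cinner r (mv r (adj B) u) (mv r (adj B) u)"
      unfolding BBu_def by (simp add: cinner_adj)
    finally have "Re (cinner r u h1) = (cvnorm r u)\<^sup>2 + \<mu> * (cvnorm r (mv r (adj B) u))\<^sup>2"
      unfolding cm_def by (simp add: cinner_self)
    moreover have "(\<sigma> * cvnorm r u)\<^sup>2 \<le> (cvnorm r (mv r (adj B) u))\<^sup>2"
      using lowBa[of u] sig by (intro power_mono) auto
    ultimately show "(1 + \<mu> * \<sigma>\<^sup>2) * (cvnorm r u)\<^sup>2 \<le> Re (cinner r u h1)"
      using mu by (simp add: algebra_simps power_mult_distrib mult_left_mono)
  qed
  have nr1: "cvnorm r r1 \<le> 3 * L * \<delta> * cvnorm n' q"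
    unfolding r1_def
  proof (rule adj_bound[where T = "\<lambda>x. mv n (adj P) (mv R U (mv r W x))"])
    show "cvnorm n' (mv n (adj P) (mv R U (mv r W x))) \<le> 3 * L * \<delta> * cvnorm r x" for x
    proof -
      have "cvnorm n' (mv n (adj P) (mv R U (mv r W x))) \<le> \<delta> * cvnorm n (mv R U (mv r W x))" by (rule PUW)
      also have "\<dots> \<le> \<delta> * (3 * L * cvnorm r x)" using del by (intro mult_left_mono bUW) auto
      finally show ?thesis by (simp add: ac_simps)
    qed
    show "cinner r x (mv R (adj W) (mv n (adj U) (mv n' P q'))) = cinner n' (mv n (adj P) (mv R U (mv r W x))) q'" for x q'
      by (simp add: cinner_adj)
    show "0 \<le> 3 * L * \<delta>" using L del by simp
  qed

  define Z where "Z = cvnorm r z"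
  define S where "S = \<mu> * \<sigma>\<^sup>2"
  have Z0: "0 \<le> Z" unfolding Z_def by simp
  have S0: "0 \<le> S" unfolding S_def using mu by simp
  have S1: "S \<le> 1/100" using musig muL2 unfolding S_def by linarith
  have e1: "cvnorm r BBm \<le> 9 * L ^ 4 * Z"
  proof -
    have "cvnorm r BBm \<le> L * cvnorm r (mv r (adj B) m)" unfolding BBm_def by (rule bnd_apply[OF bB])
    also have "\<dots> \<le> L * (L * cvnorm r m)" using L by (intro mult_left_mono bnd_apply[OF bBa]) auto
    also have "\<dots> \<le> L * (L * (9 * L\<^sup>2 * cvnorm r z))" using L nm by (intro mult_left_mono) auto
    finally show ?thesis unfolding Z_def by (simp add: power2_eq_square power4_eq_xxxx ac_simps)
  qed
  have e2: "cvnorm r Mr1 \<le> 18 * L\<^sup>2 * \<delta>\<^sup>2 * Z"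
  proof -
    have "cvnorm r Mr1 \<le> 3 * L * cvnorm r r1" unfolding Mr1_def by (rule bnd_apply[OF bM])
    also have "\<dots> \<le> 3 * L * (3 * L * \<delta> * cvnorm n' q)" using L nr1 by (intro mult_left_mono) auto
    also have "\<dots> \<le> 3 * L * (3 * L * \<delta> * (\<delta> * cvnorm n v))" using L del nq by (intro mult_left_mono) auto
    also have "\<dots> \<le> 3 * L * (3 * L * \<delta> * (\<delta> * (2 * cvnorm r z)))" using L del nv2 by (intro mult_left_mono) auto
    finally show ?thesis unfolding Z_def by (simp add: power2_eq_square ac_simps)
  qed
  have e3: "cvnorm r Vh \<le> \<sigma>\<^sup>2 / 50 * Z"
  proof -
    have "cvnorm r Vh \<le> 1 * cvnorm n h" unfolding Vh_def by (rule bnd_apply[OF bV])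
    also have "\<dots> \<le> 1/100 * \<sigma>\<^sup>2 * cvnorm n v" unfolding h_def using bnd_apply[OF Eb] by simp
    also have "\<dots> \<le> 1/100 * \<sigma>\<^sup>2 * (2 * cvnorm r z)" using nv2 by (intro mult_left_mono) auto
    finally show ?thesis unfolding Z_def by (simp add: mult.commute)
  qed
  have Er: "cvnorm r err \<le> \<mu> * \<mu> * cvnorm r BBm + \<mu> * cvnorm r Mr1 + \<mu> * cvnorm r Vh"
  proof -
    have "cvnorm r err \<le> cvnorm r (\<lambda>b. cm * cm * BBm b - cm * Mr1 b) + cvnorm r (\<lambda>b. cm * Vh b)"
      unfolding err_def by (rule cvnorm_add)
    also have "cvnorm r (\<lambda>b. cm * cm * BBm b - cm * Mr1 b) \<le> cvnorm r (\<lambda>b. cm * cm * BBm b) + cvnorm r (\<lambda>b. cm * Mr1 b)"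
      by (rule cvnorm_diff)
    finally show ?thesis unfolding cvnorm_scale cm_def using mu by (simp add: norm_mult)
  qed
  have f1: "\<mu> * \<mu> * (9 * L ^ 4 * Z) \<le> 9/100 * S * Z"
  proof -
    have "\<mu> * (\<mu> * L ^ 4) \<le> \<mu> * (1/100 * \<sigma>\<^sup>2)" using mu by (intro mult_left_mono) auto
    hence "\<mu> * (\<mu> * L ^ 4) * (9 * Z) \<le> \<mu> * (1/100 * \<sigma>\<^sup>2) * (9 * Z)" using Z0 by (intro mult_right_mono) auto
    thus ?thesis unfolding S_def by (simp add: ac_simps)
  qed
  have f2: "\<mu> * (18 * L\<^sup>2 * \<delta>\<^sup>2 * Z) \<le> 18/10000 * S * Z"
  proof -
    have "(\<delta> * L)\<^sup>2 \<le> (1/100 * \<sigma>)\<^sup>2" using del L by (intro power_mono) auto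
    moreover have "(\<delta> * L)\<^sup>2 = L\<^sup>2 * \<delta>\<^sup>2" by (simp add: power_mult_distrib)
    moreover have "(1/100 * \<sigma>)\<^sup>2 = 1/10000 * \<sigma>\<^sup>2" by (simp add: power_mult_distrib power2_eq_square)
    ultimately have "L\<^sup>2 * \<delta>\<^sup>2 \<le> 1/10000 * \<sigma>\<^sup>2" by simp
    hence "\<mu> * (L\<^sup>2 * \<delta>\<^sup>2) * (18 * Z) \<le> \<mu> * (1/10000 * \<sigma>\<^sup>2) * (18 * Z)" using mu Z0
      by (intro mult_right_mono mult_left_mono) auto
    thus ?thesis unfolding S_def by (simp add: ac_simps)
  qed
  have f3: "\<mu> * (\<sigma>\<^sup>2 / 50 * Z) = 1/50 * S * Z" unfolding S_def by simp
  have Er2: "cvnorm r err \<le> 12/100 * S * Z"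
  proof -
    have "\<mu> * \<mu> * cvnorm r BBm \<le> \<mu> * \<mu> * (9 * L ^ 4 * Z)" using e1 mu by (intro mult_left_mono) auto
    moreover have "\<mu> * cvnorm r Mr1 \<le> \<mu> * (18 * L\<^sup>2 * \<delta>\<^sup>2 * Z)" using e2 mu by (intro mult_left_mono) auto
    moreover have "\<mu> * cvnorm r Vh \<le> \<mu> * (\<sigma>\<^sup>2 / 50 * Z)" using e3 mu by (intro mult_left_mono) auto
    moreover have "0 \<le> S * Z" using S0 Z0 by simp
    ultimately show ?thesis using Er f1 f2 f3 by linarith
  qed
  have Wlow: "(1 + S) * cvnorm r u - 12/100 * S * Z \<le> cvnorm r w"
  proof -
    have "cvnorm r h1 - cvnorm r err \<le> cvnorm r (\<lambda>b. h1 b + err b)" by (rule cvnorm_diff_ge)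
    thus ?thesis using h1low Er2 wsum unfolding S_def by linarith
  qed
  define T where "T = \<mu> * s0\<^sup>2"
  have T1: "T \<le> 9/100"
  proof -
    have "s0\<^sup>2 \<le> (3 * L)\<^sup>2" using s0 s0L by (intro power_mono) auto
    hence "\<mu> * s0\<^sup>2 \<le> \<mu> * (9 * L\<^sup>2)" using mu by (intro mult_left_mono) (auto simp: power_mult_distrib)
    thus ?thesis unfolding T_def using muL2 by linarith
  qed
  have "s0 * (1 + 1/4 * S - T) \<le> cvnorm r w"
  proof (cases "6 * Z \<le> 25 * s0")
    case True
    have a1: "(1 + S) * (s0 * (1 - T)) \<le> (1 + S) * cvnorm r u"
      using uA S0 unfolding T_def by (intro mult_left_mono) auto
    have a2: "S * Z \<le> S * (25/6 * s0)" using True S0 by (intro mult_left_mono) auto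
    have a3: "0 \<le> s0 * S * (1/4 - T)" using s0 S0 T1 by simp
    have a4: "(1 + S) * (s0 * (1 - T)) - 1/2 * (S * s0) - s0 * (1 + 1/4 * S - T) = s0 * S * (1/4 - T)"
      by (simp add: algebra_simps)
    have c4: "12/100 * S * Z = 12/100 * (S * Z)" by simp
    have c5: "S * (25/6 * s0) = 25/6 * (S * s0)" by simp
    show ?thesis using Wlow a1 a2 a3 a4 c4 c5 by linarith
  next
    case False
    have m9: "0 \<le> 1 - 9 * \<mu> * L\<^sup>2" using muL2 by simp
    have b1: "(1 - 9 * \<mu> * L\<^sup>2) * Z \<le> cvnorm r u" using uB unfolding Z_def .
    have b2: "(1 + S) * cvnorm r u \<ge> cvnorm r u" using S0 by (simp add: algebra_simps)
    have b3: "S * Z \<le> 1/100 * Z" using S1 Z0 by (intro mult_right_mono) auto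
    have "\<mu> * L\<^sup>2 * Z \<le> 1/100 * Z" by (rule mult_right_mono[OF muL2 Z0])
    hence b4: "9 * \<mu> * L\<^sup>2 * Z \<le> 9/100 * Z" by (simp add: ac_simps)
    have T0: "0 \<le> T" unfolding T_def using mu by simp
    have "1 + 1/4 * S - T \<le> 1 + 1/4 * (1/100)" using S1 T0 by linarith
    hence b5: "s0 * (1 + 1/4 * S - T) \<le> s0 * (1 + 1/4 * (1/100))" using s0 by (rule mult_left_mono)
    have c1: "Z - 9 * \<mu> * L\<^sup>2 * Z \<le> cvnorm r u" using b1 by (simp add: algebra_simps)
    have c4: "(1 + S) * cvnorm r u = cvnorm r u + S * cvnorm r u" by (simp add: algebra_simps)
    have c5: "0 \<le> S * cvnorm r u" using S0 by simp
    have c6: "s0 * (1 + 1/4 * (1/100)) = 401/400 * s0" by simp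
    have c7: "12/100 * S * Z = 12/100 * (S * Z)" by simp
    show ?thesis using Wlow b3 b4 b5 c1 c4 c5 c6 c7 False s0 by linarith
  qed
  thus ?thesis unfolding w_def Wy_def S_def T_def by simp
qed



lemma mm_assoc: "mm q (mm p A B) C = mm p A (mm q B C)"
  unfolding mm_def by (rule ext, rule ext) (simp add: sum_distrib_left sum_distrib_right mult.assoc sum.swap[of _ "{..<q}"])

lemma isometry_mm_iff: "isometry q i V \<longleftrightarrow> (\<forall>a<i. \<forall>b<i. mm q (adj V) V a b = Id a b)"
  unfolding isometry_def mm_def adj_def Id_def by simp

lemma mm_Id_left: "s < r \<Longrightarrow> mm r Id V s b = V s b"
proof -
  assume s: "s < r"
  have "mm r Id V s b = (\<Sum>c<r. if s = c then V c b else 0)" unfolding mm_def Id_def by (rule sum.cong) auto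
  thus ?thesis using s by simp
qed

lemma isometry_comp:
  assumes W: "isometry R r W" and V: "isometry r i V"
  shows "isometry R i (mm r W V)"
proof -
  have "mm R (adj (mm r W V)) (mm r W V) a b = Id a b" if a: "a < i" and b: "b < i" for a b
  proof -
    have "mm R (adj (mm r W V)) (mm r W V) = mm r (adj V) (mm R (adj W) (mm r W V))"
      by (simp add: adj_mm mm_assoc)
    also have "mm R (adj W) (mm r W V) = mm r (mm R (adj W) W) V" by (simp add: mm_assoc)
    finally have "mm R (adj (mm r W V)) (mm r W V) a b = mm r (adj V) (mm r (mm R (adj W) W) V) a b" by simp
    also have "\<dots> = mm r (adj V) (mm r Id V) a b"
      using W unfolding isometry_mm_iff mm_def by (intro sum.cong refl) auto
    also have "mm r (adj V) (mm r Id V) a b = mm r (adj V) V a b"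
      unfolding mm_def[of r "adj V"] by (intro sum.cong refl) (simp add: mm_Id_left)
    also have "\<dots> = Id a b" using V a b unfolding isometry_mm_iff by simp
    finally show ?thesis .
  qed
  thus ?thesis unfolding isometry_mm_iff by blast
qed


lemma r_le_R:
  assumes W: "isometry R r W"
  shows "r \<le> R"
proof -
  define \<rho> where "\<rho> c = (\<Sum>a<r. (cmod (W c a))\<^sup>2)" for c
  have rho1: "\<rho> c \<le> 1" if c: "c < R" for c
  proof -
    define x where "x = (\<lambda>a. cnj (W c a))"
    have nx: "(cvnorm r x)\<^sup>2 = \<rho> c" unfolding cvnorm_sq x_def \<rho>_def by simp
    have "mv r W x c = complex_of_real (\<rho> c)"
      unfolding mv_def x_def \<rho>_def of_real_sum by (rule sum.cong[OF refl]) (metis complex_norm_square)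
    moreover have r0: "0 \<le> \<rho> c" unfolding \<rho>_def by (simp add: sum_nonneg)
    ultimately have "(\<rho> c)\<^sup>2 = (cmod (mv r W x c))\<^sup>2" by simp
    also have "\<dots> \<le> (cvnorm R (mv r W x))\<^sup>2"
      unfolding cvnorm_sq using c by (intro member_le_sum) auto
    also have "\<dots> = \<rho> c" using isometry_norm[OF W] nx by simp
    finally have sq: "(\<rho> c)\<^sup>2 \<le> \<rho> c" .
    show ?thesis
    proof (rule ccontr)
      assume "\<not> \<rho> c \<le> 1"
      hence "\<rho> c * 1 < \<rho> c * \<rho> c" using r0 by (intro mult_strict_left_mono) auto
      thus False using sq by (simp add: power2_eq_square)
    qed
  qed
  have col: "(\<Sum>c<R. (cmod (W c a))\<^sup>2) = 1" if a: "a < r" for a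
  proof -
    have "(\<Sum>c<R. cnj (W c a) * W c a) = 1" using W a unfolding isometry_def by simp
    moreover have "complex_of_real (\<Sum>c<R. (cmod (W c a))\<^sup>2) = (\<Sum>c<R. cnj (W c a) * W c a)"
      unfolding of_real_sum by (rule sum.cong[OF refl]) (metis complex_norm_square mult.commute)
    ultimately have "complex_of_real (\<Sum>c<R. (cmod (W c a))\<^sup>2) = 1" by simp
    thus ?thesis using of_real_eq_1_iff by blast
  qed
  have "real r = (\<Sum>a<r. \<Sum>c<R. (cmod (W c a))\<^sup>2)" using col by simp
  also have "\<dots> = (\<Sum>c<R. \<rho> c)" unfolding \<rho>_def by (rule sum.swap)
  also have "\<dots> \<le> (\<Sum>c<R. 1)" by (intro sum_mono rho1) simp
  finally show ?thesis by simp
qed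

lemma sigma_comp:
  assumes r: "0 < r" and W: "isometry R r W"
  shows "sigma r (mm R C W) p r \<le> sigma r C p R"
  unfolding sigma_def[of r "mm R C W"]
proof (rule cSup_least)
  show "{Inf {cvnorm p (mv r (mm R C W) (mv r V y)) |y. cvnorm r y = 1} |V. isometry r r V} \<noteq> {}"
    using isometry_Id by blast
next
  fix x assume "x \<in> {Inf {cvnorm p (mv r (mm R C W) (mv r V y)) |y. cvnorm r y = 1} |V. isometry r r V}"
  then obtain V where V: "isometry r r V" and x: "x = Inf {cvnorm p (mv r (mm R C W) (mv r V y)) |y. cvnorm r y = 1}"
    by blast
  have "x = Inf {cvnorm p (mv R C (mv r (mm r W V) y)) |y. cvnorm r y = 1}"
    unfolding x by (simp add: mv_mm)
  also have "\<dots> \<le> sigma r C p R" unfolding sigma_def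
    by (rule cSup_upper[OF _ sigma_set_bdd[OF r]]) (use isometry_comp[OF W V] in blast)
  finally show "x \<le> sigma r C p R" .
qed

lemma low_from_unit:
  assumes "\<And>x. cvnorm q x = 1 \<Longrightarrow> s \<le> cvnorm p (mv q A x)"
  shows "s * cvnorm q x \<le> cvnorm p (mv q A x)"
proof (cases "cvnorm q x = 0")
  case True thus ?thesis by simp
next
  case False
  let ?c = "complex_of_real (1 / cvnorm q x)"
  have "s \<le> cvnorm p (mv q A (\<lambda>b. ?c * x b))" using assms unit_scale[OF False] by blast
  hence "s \<le> (1 / cvnorm q x) * cvnorm p (mv q A x)"
    unfolding mv_scale cvnorm_scale by (simp add: norm_divide)
  moreover have "0 < cvnorm q x" using False cvnorm_nonneg[of q x] by linarith
  ultimately show ?thesis by (simp add: field_simps)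
qed

lemma sigma_upper:
  assumes r: "0 < r" and W: "isometry R r W"
    and BM: "\<forall>a<r. \<forall>b<R. Bm a b = mm r Mt (adj W) a b"
    and x: "cvnorm r x = 1"
  shows "sigma r Bm r R \<le> cvnorm r (mv r Mt x)"
proof (rule sigma_le[OF r W])
  fix V' assume V': "isometry R r V'"
  have BV: "mv R Bm (mv r V' y) a = mv r Mt (mv r (mm R (adj W) V') y) a" if a: "a < r" for y a
  proof -
    have "mv R Bm (mv r V' y) a = mv R (mm r Mt (adj W)) (mv r V' y) a" using BM a by (intro mv_box) simp
    thus ?thesis by (simp add: mv_mm)
  qed
  define T where "T = mm R (adj W) V'"
  have bT: "cvnorm r (mv r T y) \<le> cvnorm r y" for y
  proof -
    have "cvnorm r (mv r T y) = cvnorm r (mv R (adj W) (mv r V' y))" unfolding T_def by (simp add: mv_mm)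
    also have "\<dots> \<le> 1 * cvnorm R (mv r V' y)" by (rule bnd_apply[OF isometry_adj_bnd[OF W]])
    also have "\<dots> = cvnorm r y" using isometry_norm[OF V'] by simp
    finally show ?thesis .
  qed
  show "\<exists>y. cvnorm r y = 1 \<and> cvnorm r (mv R Bm (mv r V' y)) \<le> cvnorm r (mv r Mt x)"
    using square_dich[of r T]
  proof
    assume "\<exists>y. cvnorm r y = 1 \<and> (\<forall>a<r. mv r T y a = 0)"
    then obtain y where y: "cvnorm r y = 1" "\<forall>a<r. mv r T y a = 0" by blast
    have "cvnorm r (mv R Bm (mv r V' y)) = cvnorm r (mv r Mt (mv r T y))"
      unfolding T_def by (rule cvnorm_cong) (rule BV)
    also have "mv r Mt (mv r T y) = mv r Mt (\<lambda>_. 0)" by (rule mv_cong) (use y in simp)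
    also have "cvnorm r (mv r Mt (\<lambda>_. 0)) = 0" unfolding mv_def cvnorm_def by simp
    finally show ?thesis using y(1) by auto
  next
    assume "\<forall>u. \<exists>y. \<forall>a<r. mv r T y a = u a"
    then obtain y1 where y1: "\<forall>a<r. mv r T y1 a = x a" by blast
    have Ty1: "cvnorm r (mv r T y1) = 1" using y1 x by (metis cvnorm_cong)
    hence n1: "1 \<le> cvnorm r y1" using bT[of y1] by simp
    hence nz: "cvnorm r y1 \<noteq> 0" by simp
    let ?c = "complex_of_real (1 / cvnorm r y1)"
    define y where "y = (\<lambda>b. ?c * y1 b)"
    have yu: "cvnorm r y = 1" unfolding y_def by (rule unit_scale[OF nz])
    have "cvnorm r (mv R Bm (mv r V' y)) = cvnorm r (mv r Mt (mv r T y))"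
      unfolding T_def by (rule cvnorm_cong) (rule BV)
    also have "mv r Mt (mv r T y) = (\<lambda>a. ?c * mv r Mt (mv r T y1) a)" unfolding y_def mv_scale ..
    also have "cvnorm r \<dots> = (1 / cvnorm r y1) * cvnorm r (mv r Mt (mv r T y1))"
      unfolding cvnorm_scale by (simp add: norm_divide)
    also have "mv r Mt (mv r T y1) = mv r Mt x" by (rule mv_cong) (use y1 in simp)
    also have "(1 / cvnorm r y1) * cvnorm r (mv r Mt x) \<le> cvnorm r (mv r Mt x)"
      using n1 by (simp add: divide_le_eq mult_le_cancel_right1 field_simps)
        (metis cvnorm_nonneg mult_le_cancel_left1 not_le order_less_le_trans zero_less_one)
    finally show ?thesis using yu by blast
  qed
qed



lemma slice_prod: "0 < k \<Longrightarrow> fslice k (tprod k m A B) j = mm m (fslice k A j) (fslice k B j)"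
  by (rule ext, rule ext) (rule fslice_tprod)

lemma slice_ttr: "0 < k \<Longrightarrow> fslice k (ttr k T) j = adj (fslice k T j)"
  by (rule ext, rule ext) (rule fslice_ttr)

lemma teq_iso:
  assumes k: "0 < k" and t: "teq p p k (tprod k q (ttr k A) A) tid"
  shows "isometry q p (fslice k A j)"
  unfolding isometry_mm_iff
proof (intro allI impI)
  fix a b assume a: "a < p" and b: "b < p"
  have "fslice k (tprod k q (ttr k A) A) j a b = fslice k tid j a b" by (rule fslice_teq[OF t a b])
  thus "mm q (adj (fslice k A j)) (fslice k A j) a b = Id a b"
    using k by (simp add: slice_prod slice_ttr fslice_tid Id_def)
qed

lemma teq_prod3:
  assumes k: "0 < k" and t: "teq p q k T (tprod k s (tprod k s A S) (ttr k B))" and a: "a < p" and b: "b < q"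
  shows "fslice k T j a b = mm s (fslice k A j) (mm s (fslice k S j) (adj (fslice k B j))) a b"
proof -
  have "fslice k T j a b = fslice k (tprod k s (tprod k s A S) (ttr k B)) j a b" by (rule fslice_teq[OF t a b])
  thus ?thesis using k by (simp add: slice_prod slice_ttr mm_assoc)
qed

lemma powr_m2: "0 < (x::real) \<Longrightarrow> x powr (-2) = 1 / x\<^sup>2"
  by (simp add: powr_minus powr_numeral divide_inverse)

lemma powr_m1: "0 < (x::real) \<Longrightarrow> x powr (-1) = 1 / x"
  by (simp add: powr_minus divide_inverse)

lemma n_pos:
  assumes k: "0 < k" and r: "0 < r" and sp: "0 < tsigma_min k n r X"
  shows "0 < n"
proof (rule ccontr)
  assume "\<not> 0 < n"
  hence n0: "n = 0" by simp
  have "tsigma_min k n r X \<le> 0" unfolding tsigma_min_def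
  proof (rule sigma_le)
    show "0 < r * k" using k r by simp
    show "isometry (k * r) (r * k) Id" using isometry_Id[of "k*r"] by (simp add: mult.commute)
    fix V assume "isometry (k * r) (r * k) V"
    show "\<exists>y. cvnorm (r * k) y = 1 \<and> cvnorm (k * n) (mv (k * r) (tbar k n r X) (mv (r * k) V y)) \<le> 0"
      using e0_unit[of "r*k"] k r n0 by (intro exI[of _ e0]) (simp add: cvnorm_def)
  qed
  thus False using sp by simp
qed


lemma glue:
  fixes n r R k m s j :: nat and As :: "nat \<Rightarrow> tensor" and X U VX VXp W Vuw :: tensor and \<mu> :: real
  assumes k: "0 < k" and r: "0 < r" and mu: "0 < \<mu>"
    and sigpos: "0 < tsigma_min k n r X"
    and cX: "colsub n r k r X VX"
    and hP: "teq n n k (tprod k (n - r) VXp (ttr k VXp)) (tsub tid (tprod k r VX (ttr k VX)))"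
    and tW: "\<exists>Vt St. tsvd_compact r R k r (tprod k n (ttr k VX) U) Vt St W \<and> (\<forall>a<r. tube_inv k (St a a))"
    and cUW: "colsub n r k s (tprod k R U W) Vuw"
    and hmu: "\<mu> \<le> 1/100 * (tnorm k n r X) powr (-2) * (kappa k n r X) powr (-2)"
    and hU: "tnorm k n R U \<le> 3 * tnorm k n r X"
    and hV: "tnorm k (n - r) s (tprod k n (ttr k VXp) Vuw) \<le> 1/100 * (kappa k n r X) powr (-1)"
    and hE: "tnorm k n n (tsub (AstarA n k m As (tsub (tprod k r X (ttr k X)) (tprod k R U (ttr k U))))
                       (tsub (tprod k r X (ttr k X)) (tprod k R U (ttr k U))))
      \<le> 1/100 * (tsigma_min k n r X)\<^sup>2"
    and j: "j < k"
  shows "sigma_min (fslice k (tprod k n (ttr k VX) (gd_step n r R k m As \<mu> X U)) j) r R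
         \<ge> sigma_min (fslice k (tprod k R (tprod k n (ttr k VX) (gd_step n r R k m As \<mu> X U)) W) j) r r
     \<and> sigma_min (fslice k (tprod k R (tprod k n (ttr k VX) (gd_step n r R k m As \<mu> X U)) W) j) r r
         \<ge> sigma_min (fslice k (tprod k n (ttr k VX) U) j) r R *
           (1 + 1/4 * \<mu> * (tsigma_min k n r X)\<^sup>2
              - \<mu> * (sigma_min (fslice k (tprod k n (ttr k VX) U) j) r R)\<^sup>2)"
proof -
  define L where "L = tnorm k n r X"
  define \<sigma> where "\<sigma> = tsigma_min k n r X"
  have n: "0 < n" by (rule n_pos[OF k r sigpos])
  obtain SX ZX where tX: "tsvd_compact n r k r X VX SX ZX" using cX unfolding colsub_def by blast
  obtain Vt St where tW': "tsvd_compact r R k r (tprod k n (ttr k VX) U) Vt St W" using tW by blast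
  obtain SY ZY where tY: "tsvd_compact n r k s (tprod k R U W) Vuw SY ZY" using cUW unfolding colsub_def by blast
  define Vj where "Vj = fslice k VX j"
  define Xj where "Xj = fslice k X j"
  define Pj where "Pj = fslice k VXp j"
  define Uj where "Uj = fslice k U j"
  define Wj where "Wj = fslice k W j"
  define Yj where "Yj = fslice k Vuw j"
  define B where "B = mm r (fslice k SX j) (adj (fslice k ZX j))"
  define Mt where "Mt = mm r (fslice k Vt j) (fslice k St j)"
  define Q where "Q = mm s (fslice k SY j) (adj (fslice k ZY j))"
  have isoV: "isometry n r Vj" unfolding Vj_def using tX unfolding tsvd_compact_def by (intro teq_iso[OF k]) auto
  have isoW: "isometry R r Wj" unfolding Wj_def using tW' unfolding tsvd_compact_def by (intro teq_iso[OF k]) auto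
  have isoY: "isometry n s Yj" unfolding Yj_def using tY unfolding tsvd_compact_def by (intro teq_iso[OF k]) auto
  have rR: "r \<le> R" by (rule r_le_R[OF isoW])
  hence R: "0 < R" using r by simp
  have XVB: "\<forall>a<n. \<forall>b<r. Xj a b = mm r Vj B a b"
    unfolding Xj_def Vj_def B_def using tX unfolding tsvd_compact_def
    by (intro allI impI teq_prod3[OF k]) auto
  have VU: "\<forall>a<r. \<forall>b<R. mm n (adj Vj) Uj a b = mm r Mt (adj Wj) a b"
  proof (intro allI impI)
    fix a b assume a: "a < r" and b: "b < R"
    have "fslice k (tprod k n (ttr k VX) U) j a b = mm r (fslice k Vt j) (mm r (fslice k St j) (adj (fslice k W j))) a b"
      using tW' unfolding tsvd_compact_def by (intro teq_prod3[OF k _ a b]) auto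
    thus "mm n (adj Vj) Uj a b = mm r Mt (adj Wj) a b"
      unfolding Vj_def Uj_def Mt_def Wj_def using k by (simp add: slice_prod slice_ttr mm_assoc)
  qed
  have UWY: "\<forall>a<n. \<forall>b<r. mm R Uj Wj a b = mm s Yj Q a b"
  proof (intro allI impI)
    fix a b assume a: "a < n" and b: "b < r"
    have "fslice k (tprod k R U W) j a b = mm s (fslice k Vuw j) (mm s (fslice k SY j) (adj (fslice k ZY j))) a b"
      using tY unfolding tsvd_compact_def by (intro teq_prod3[OF k _ a b]) auto
    thus "mm R Uj Wj a b = mm s Yj Q a b"
      unfolding Uj_def Wj_def Yj_def Q_def using k by (simp add: slice_prod)
  qed
  have PP: "\<forall>a<n. \<forall>b<n. mm (n - r) Pj (adj Pj) a b = Id a b - mm r Vj (adj Vj) a b"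
  proof (intro allI impI)
    fix a b assume a: "a < n" and b: "b < n"
    have "fslice k (tprod k (n - r) VXp (ttr k VXp)) j a b = fslice k (tsub tid (tprod k r VX (ttr k VX))) j a b"
      by (rule fslice_teq[OF hP a b])
    thus "mm (n - r) Pj (adj Pj) a b = Id a b - mm r Vj (adj Vj) a b"
      unfolding Pj_def Vj_def using k by (simp add: slice_prod slice_ttr fslice_tsub fslice_tid Id_def)
  qed

  have Xup: "bnd n r Xj L" unfolding Xj_def L_def by (rule tnorm_slice[OF j r n])
  have Xlow1: "\<sigma> \<le> cvnorm n (mv r Xj e)" if "cvnorm r e = 1" for e
    unfolding \<sigma>_def Xj_def by (rule tsigma_le[OF j r n that])
  have Xlow: "\<sigma> * cvnorm r e \<le> cvnorm n (mv r Xj e)" for e by (rule low_from_unit) (rule Xlow1)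
  have sig: "0 < \<sigma>" unfolding \<sigma>_def by (rule sigpos)
  have sigL: "\<sigma> \<le> L"
  proof -
    have "\<sigma> \<le> cvnorm n (mv r Xj e0)" by (rule Xlow1[OF e0_unit[OF r]])
    also have "\<dots> \<le> L * cvnorm r e0" by (rule bnd_apply[OF Xup])
    finally show ?thesis using e0_unit[OF r] by simp
  qed
  have L: "0 < L" using sig sigL by linarith
  have kap: "kappa k n r X = L / \<sigma>" unfolding kappa_def L_def \<sigma>_def ..
  have kpos: "0 < L / \<sigma>" using L sig by simp
  have muL: "\<mu> * L ^ 4 \<le> 1/100 * \<sigma>\<^sup>2"
  proof -
    have "\<mu> \<le> 1/100 * (1 / L\<^sup>2) * (1 / (L / \<sigma>)\<^sup>2)"
      using hmu unfolding kap L_def[symmetric] using powr_m2[OF L] powr_m2[OF kpos] by simp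
    also have "\<dots> = 1/100 * \<sigma>\<^sup>2 / L ^ 4" using L sig by (simp add: field_simps power2_eq_square power4_eq_xxxx)
    finally have "\<mu> \<le> 1/100 * \<sigma>\<^sup>2 / L ^ 4" .
    thus ?thesis using L by (simp add: field_simps)
  qed
  define \<delta> where "\<delta> = 1/100 * (\<sigma> / L)"
  have del0: "0 \<le> \<delta>" unfolding \<delta>_def using sig L by simp
  have delL: "\<delta> * L \<le> 1/100 * \<sigma>" unfolding \<delta>_def using L by simp
  have PY: "bnd (n - r) s (mm n (adj Pj) Yj) \<delta>"
  proof (cases "n - r = 0 \<or> s = 0")
    case True
    show ?thesis unfolding bnd_def
    proof
      fix x
      have "cvnorm (n - r) (mv s (mm n (adj Pj) Yj) x) = 0"
        using True unfolding cvnorm_def mv_def by auto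
      thus "cvnorm (n - r) (mv s (mm n (adj Pj) Yj) x) \<le> \<delta> * cvnorm s x" using del0 by simp
    qed
  next
    case False
    hence "0 < s" "0 < n - r" by auto
    have "bnd (n - r) s (fslice k (tprod k n (ttr k VXp) Vuw) j) (tnorm k (n - r) s (tprod k n (ttr k VXp) Vuw))"
      by (rule tnorm_slice[OF j \<open>0 < s\<close> \<open>0 < n - r\<close>])
    hence "bnd (n - r) s (mm n (adj Pj) Yj) (tnorm k (n - r) s (tprod k n (ttr k VXp) Vuw))"
      unfolding Pj_def Yj_def using k by (simp add: slice_prod slice_ttr)
    moreover have "tnorm k (n - r) s (tprod k n (ttr k VXp) Vuw) \<le> \<delta>"
      using hV unfolding kap powr_m1[OF kpos] \<delta>_def using L sig by (simp add: field_simps)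
    ultimately show ?thesis by (rule bnd_mono)
  qed
  have Ub: "bnd n R Uj (3 * L)"
    unfolding Uj_def L_def by (rule bnd_mono[OF tnorm_slice[OF j R n] hU])
  define D where "D = tsub (tprod k r X (ttr k X)) (tprod k R U (ttr k U))"
  define Ej where "Ej = fslice k (tsub (AstarA n k m As D) D) j"
  have Eb: "bnd n n Ej (1/100 * \<sigma>\<^sup>2)"
    unfolding Ej_def \<sigma>_def by (rule bnd_mono[OF tnorm_slice[OF j n n]]) (use hE in \<open>simp add: D_def\<close>)
  define G where "G = fslice k (gd_step n r R k m As \<mu> X U) j"
  have Gdef: "mv R G u a = mv R Uj u a + complex_of_real \<mu> *
        (mv r Xj (mv n (adj Xj) (mv R Uj u)) a - mv R Uj (mv n (adj Uj) (mv R Uj u)) a + mv n Ej (mv R Uj u) a)"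
    if a: "a < n" for u a
  proof -
    define Aj where "Aj = fslice k (AstarA n k m As D) j"
    define Hj where "Hj = fslice k (tadd tid (tscale \<mu> (AstarA n k m As D))) j"
    have G1: "G = mm n Hj Uj" unfolding G_def gd_step_def Hj_def Uj_def D_def using k by (simp add: slice_prod)
    have Hj: "Hj a' b' = Id a' b' + complex_of_real \<mu> * Aj a' b'" for a' b'
      unfolding Hj_def Aj_def using k by (simp add: fslice_tadd fslice_tscale fslice_tid Id_def)
    have Aj: "Aj a' b' = (mm r Xj (adj Xj) a' b' - mm R Uj (adj Uj) a' b') + Ej a' b'" for a' b'
      unfolding Aj_def Ej_def D_def Xj_def Uj_def using k by (simp add: fslice_tsub slice_prod slice_ttr)
    define w where "w = mv R Uj u"
    have "mv R G u a = mv n Hj w a" unfolding G1 w_def by (simp add: mv_mm)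
    also have "\<dots> = mv n Id w a + complex_of_real \<mu> * mv n Aj w a"
      unfolding mv_def Hj by (simp add: distrib_right sum.distrib sum_distrib_left mult.assoc)
    also have "mv n Id w a = w a" by (rule mv_Id[OF a])
    also have "mv n Aj w a = mv n (mm r Xj (adj Xj)) w a - mv n (mm R Uj (adj Uj)) w a + mv n Ej w a"
      unfolding mv_def Aj by (simp add: distrib_right sum.distrib left_diff_distrib sum_subtractf)
    finally show ?thesis unfolding w_def by (simp add: mv_mm)
  qed
  define s0 where "s0 = sigma_min (fslice k (tprod k n (ttr k VX) U) j) r R"
  define Bm where "Bm = fslice k (tprod k n (ttr k VX) U) j"
  have Bm: "Bm = mm n (adj Vj) Uj" unfolding Bm_def Vj_def Uj_def using k by (simp add: slice_prod slice_ttr)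
  have s0def: "s0 = sigma r Bm r R" unfolding s0_def Bm_def sigma_min_def using rR by (simp add: min_def)
  have s0pos: "0 \<le> s0" unfolding s0def by (rule sigma_nonneg[OF r isoW])
  have Mlow: "s0 * cvnorm r x \<le> cvnorm r (mv n (adj Vj) (mv R Uj (mv r Wj x)))" for x
  proof -
    have eqM: "cvnorm r (mv n (adj Vj) (mv R Uj (mv r Wj x))) = cvnorm r (mv r Mt x)" for x
    proof (rule cvnorm_cong)
      fix a assume a: "a < r"
      have "mv n (adj Vj) (mv R Uj (mv r Wj x)) a = mv r Mt (mv R (adj Wj) (mv r Wj x)) a"
        by (rule L_VU[OF VU a])
      also have "mv r Mt (mv R (adj Wj) (mv r Wj x)) = mv r Mt x"
        by (rule mv_cong) (rule isometry_inv[OF isoW])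
      finally show "mv n (adj Vj) (mv R Uj (mv r Wj x)) a = mv r Mt x a" .
    qed
    have "s0 * cvnorm r x \<le> cvnorm r (mv r Mt x)"
    proof (rule low_from_unit)
      fix x assume x: "cvnorm r x = 1"
      show "s0 \<le> cvnorm r (mv r Mt x)" unfolding s0def
        by (rule sigma_upper[OF r isoW _ x]) (use VU Bm in simp)
    qed
    thus ?thesis using eqM by simp
  qed
  have coreRes: "s0 * (1 + 1/4 * \<mu> * \<sigma>\<^sup>2 - \<mu> * s0\<^sup>2) \<le> cvnorm r (mv n (adj Vj) (mv R G (mv r Wj y)))"
    if y: "cvnorm r y = 1" for y
    by (rule core[OF r n isoV XVB Xlow Xup PP VU isoW UWY isoY PY Ub Eb Gdef Mlow sig sigL mu muL del0 delL s0pos y])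
  define Cj where "Cj = fslice k (tprod k n (ttr k VX) (gd_step n r R k m As \<mu> X U)) j"
  have Cj: "Cj = mm n (adj Vj) G" unfolding Cj_def G_def Vj_def using k by (simp add: slice_prod slice_ttr)
  have CW: "fslice k (tprod k R (tprod k n (ttr k VX) (gd_step n r R k m As \<mu> X U)) W) j = mm R Cj Wj"
    unfolding Cj_def Wj_def using k by (simp add: slice_prod)
  have A: "sigma_min (mm R Cj Wj) r r \<le> sigma_min Cj r R"
    unfolding sigma_min_def using rR sigma_comp[OF r isoW, of Cj r] by (simp add: min_def)
  have smr: "sigma_min (mm R Cj Wj) r r = sigma r (mm R Cj Wj) r r" by (simp add: sigma_min_def)
  have B: "s0 * (1 + 1/4 * \<mu> * \<sigma>\<^sup>2 - \<mu> * s0\<^sup>2) \<le> sigma_min (mm R Cj Wj) r r"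
    unfolding smr
  proof (rule sigma_ge[OF r isometry_Id])
    fix y assume y: "cvnorm r y = 1"
    have "cvnorm r (mv r (mm R Cj Wj) (mv r Id y)) = cvnorm r (mv r (mm R Cj Wj) y)"
      by (rule arg_cong[where f = "cvnorm r"], rule mv_cong) (rule mv_Id)
    also have "\<dots> = cvnorm r (mv n (adj Vj) (mv R G (mv r Wj y)))" unfolding Cj by (simp add: mv_mm)
    finally show "s0 * (1 + 1/4 * \<mu> * \<sigma>\<^sup>2 - \<mu> * s0\<^sup>2) \<le> cvnorm r (mv r (mm R Cj Wj) (mv r Id y))"
      using coreRes[OF y] by simp
  qed
  show ?thesis using A B CW unfolding Cj_def s0_def \<sigma>_def by simp
qed


theorem lemma11:
  shows "\<exists>c::real>0. \<forall>(n::nat) (r::nat) (R::nat) (k::nat) (m::nat) (s::nat)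
      (As::nat \<Rightarrow> tensor) (X::tensor) (U::tensor) (\<mu>::real)
      (VX::tensor) (VXp::tensor) (W::tensor) (Vuw::tensor).
    0 < k \<and> 0 < r \<and> 0 < \<mu> \<and>
    (\<forall>i<m. teq n n k (ttr k (As i)) (As i)) \<and>
    0 < tsigma_min k n r X \<and>
    colsub n r k r X VX \<and>
    teq n n k (tprod k (n - r) VXp (ttr k VXp)) (tsub tid (tprod k r VX (ttr k VX))) \<and>
    (\<exists>Vt St. tsvd_compact r R k r (tprod k n (ttr k VX) U) Vt St W \<and>
             (\<forall>a<r. tube_inv k (St a a))) \<and>
    colsub n r k s (tprod k R U W) Vuw \<and>
    \<mu> \<le> c * (tnorm k n r X) powr (-2) * (kappa k n r X) powr (-2) \<and>
    tnorm k n R U \<le> 3 * tnorm k n r X \<and>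
    tnorm k (n - r) s (tprod k n (ttr k VXp) Vuw) \<le> c * (kappa k n r X) powr (-1) \<and>
    tnorm k n n (tsub (AstarA n k m As (tsub (tprod k r X (ttr k X)) (tprod k R U (ttr k U))))
                       (tsub (tprod k r X (ttr k X)) (tprod k R U (ttr k U))))
      \<le> c * (tsigma_min k n r X)\<^sup>2
    \<longrightarrow>
    (\<forall>j<k.
       sigma_min (fslice k (tprod k n (ttr k VX) (gd_step n r R k m As \<mu> X U)) j) r R
         \<ge> sigma_min (fslice k (tprod k R (tprod k n (ttr k VX) (gd_step n r R k m As \<mu> X U)) W) j) r r
     \<and> sigma_min (fslice k (tprod k R (tprod k n (ttr k VX) (gd_step n r R k m As \<mu> X U)) W) j) r r
         \<ge> sigma_min (fslice k (tprod k n (ttr k VX) U) j) r R *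
           (1 + 1/4 * \<mu> * (tsigma_min k n r X)\<^sup>2
              - \<mu> * (sigma_min (fslice k (tprod k n (ttr k VX) U) j) r R)\<^sup>2))"
    apply (rule exI[of _ "1/100"])
  apply (rule conjI)
   apply simp
  apply (intro allI impI)
  apply (elim conjE)
  apply (rule glue)
               apply assumption+
  done

end
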